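(* Let $\omega>0$, $B>0$, $\lambda\le0$, and let $V:\mathbb{R}\to[0,\infty)$ be smooth with bounded derivative and $\mathrm{supp}\,V\subset[-s_0,s_0]$ for some $s_0>0$. Let $H(A)$ be the closure in $L^2(\mathbb{R}^2)$ of the operator $(i\partial_x-By)^2-\partial_y^2+\omega^2y^2+\lambda y^2V(xy)$ defined on $C_0^\infty(\mathbb{R}^2)$ (which is essentially self-adjoint there). Then $\sigma_{\mathrm{ess}}(H(A))\supset[\sqrt{\omega^2+B^2},\infty)$.
   Context: $H(A)$ is the operator $(i\nabla+A)^2+\omega^2y^2+\lambda y^2V(xy)$ with $A=(-By,0)$ the vector potential of a homogeneous magnetic field of intensity $B$. *)

theory Defs
  imports "HOL-Analysis.Analysis"
begin

type_synonym fn2 = "real \<times> real \<Rightarrow> complex"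

definition dx :: "fn2 \<Rightarrow> fn2" where
  "dx f = (\<lambda>(x,y). vector_derivative (\<lambda>t. f (t,y)) (at x))"

definition dy :: "fn2 \<Rightarrow> fn2" where
  "dy f = (\<lambda>(x,y). vector_derivative (\<lambda>t. f (x,t)) (at y))"

definition smooth2 :: "fn2 \<Rightarrow> bool" where
  "smooth2 f \<longleftrightarrow> (\<forall>ws::bool list.
     let g = fold (\<lambda>b h. if b then dx h else dy h) ws f in
       continuous_on UNIV g \<and>
       (\<forall>x y. (\<lambda>t. g (t,y)) differentiable (at x) \<and> (\<lambda>t. g (x,t)) differentiable (at y)))"

definition test_fn :: "fn2 \<Rightarrow> bool" where
  "test_fn f \<longleftrightarrow> smooth2 f \<and> compact (closure {z. f z \<noteq> 0})"

text \<open>The magnetic derivative i d/dx - B y (vector potential A = (-By,0)).\<close>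
definition Dmag :: "real \<Rightarrow> fn2 \<Rightarrow> fn2" where
  "Dmag B f = (\<lambda>(x,y). \<i> * dx f (x,y) - complex_of_real (B * y) * f (x,y))"

definition Hop :: "real \<Rightarrow> real \<Rightarrow> real \<Rightarrow> (real \<Rightarrow> real) \<Rightarrow> fn2 \<Rightarrow> fn2" where
  "Hop B w lam V f = (\<lambda>(x,y). Dmag B (Dmag B f) (x,y) - dy (dy f) (x,y)
        + complex_of_real (w^2 * y^2 + lam * y^2 * V (x*y)) * f (x,y))"

text \<open>L^2(R^2), elements represented by functions (identified up to a.e. equality).\<close>
definition L2 :: "fn2 set" where
  "L2 = {f. f \<in> borel_measurable lborel \<and> integrable lborel (\<lambda>z. (cmod (f z))^2)}"

definition L2norm :: "fn2 \<Rightarrow> real" where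
  "L2norm f = sqrt (\<integral>z. (cmod (f z))^2 \<partial>lborel)"

text \<open>Graph of the closure in L^2 of an operator T defined on C_0^infinity:
  G f g iff (f,g) lies in the L^2-closure of the graph of T.\<close>
definition closure_graph :: "(fn2 \<Rightarrow> fn2) \<Rightarrow> fn2 \<Rightarrow> fn2 \<Rightarrow> bool" where
  "closure_graph T f g \<longleftrightarrow> f \<in> L2 \<and> g \<in> L2 \<and>
     (\<exists>\<phi>::nat \<Rightarrow> fn2. (\<forall>n. test_fn (\<phi> n)) \<and>
        (\<lambda>n. L2norm (\<lambda>z. \<phi> n z - f z)) \<longlonglongrightarrow> 0 \<and>
        (\<lambda>n. L2norm (\<lambda>z. T (\<phi> n) z - g z)) \<longlonglongrightarrow> 0)"

text \<open>Resolvent set: H - z is a bijection from the domain onto L^2 (mod a.e.) with bounded inverse.\<close>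
definition in_resolvent :: "(fn2 \<Rightarrow> fn2 \<Rightarrow> bool) \<Rightarrow> complex \<Rightarrow> bool" where
  "in_resolvent G z \<longleftrightarrow>
     (\<exists>C. \<forall>h\<in>L2. \<exists>f g. G f g \<and> (AE p in lborel. g p - z * f p = h p) \<and> L2norm f \<le> C * L2norm h) \<and>
     (\<forall>f g. G f g \<and> (AE p in lborel. g p = z * f p) \<longrightarrow> (AE p in lborel. f p = 0))"

definition op_spectrum :: "(fn2 \<Rightarrow> fn2 \<Rightarrow> bool) \<Rightarrow> complex set" where
  "op_spectrum G = {z. \<not> in_resolvent G z}"

definition is_eigenfunction :: "(fn2 \<Rightarrow> fn2 \<Rightarrow> bool) \<Rightarrow> complex \<Rightarrow> fn2 \<Rightarrow> bool" where
  "is_eigenfunction G z f \<longleftrightarrow> (\<exists>g. G f g \<and> (AE p in lborel. g p = z * f p))"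

definition is_eigenvalue :: "(fn2 \<Rightarrow> fn2 \<Rightarrow> bool) \<Rightarrow> complex \<Rightarrow> bool" where
  "is_eigenvalue G z \<longleftrightarrow> (\<exists>f. is_eigenfunction G z f \<and> \<not> (AE p in lborel. f p = 0))"

text \<open>Finite multiplicity: the eigenspace (mod a.e.) has finite dimension.\<close>
definition finite_multiplicity :: "(fn2 \<Rightarrow> fn2 \<Rightarrow> bool) \<Rightarrow> complex \<Rightarrow> bool" where
  "finite_multiplicity G z \<longleftrightarrow> (\<exists>N::nat. \<forall>fs::nat \<Rightarrow> fn2. (\<forall>i\<le>N. is_eigenfunction G z (fs i)) \<longrightarrow>
      (\<exists>c::nat \<Rightarrow> complex. (\<exists>i\<le>N. c i \<noteq> 0) \<and> (AE p in lborel. (\<Sum>i\<le>N. c i * fs i p) = 0)))"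

definition disc_spectrum :: "(fn2 \<Rightarrow> fn2 \<Rightarrow> bool) \<Rightarrow> complex set" where
  "disc_spectrum G = {z \<in> op_spectrum G. (\<exists>e>0. ball z e \<inter> op_spectrum G \<subseteq> {z})
      \<and> is_eigenvalue G z \<and> finite_multiplicity G z}"

definition ess_spectrum :: "(fn2 \<Rightarrow> fn2 \<Rightarrow> bool) \<Rightarrow> complex set" where
  "ess_spectrum G = op_spectrum G - disc_spectrum G"

end

theory Submission
  imports Defs "HOL-Computational_Algebra.Polynomial"
begin

definition psi :: "real \<Rightarrow> real" where
  "psi s = (if s > 0 then exp (-1/s) else 0)"

fun Qp :: "nat \<Rightarrow> real poly" where
  "Qp 0 = 1"
| "Qp (Suc n) = [:0,0,1:] * (Qp n - pderiv (Qp n))"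

definition psiD :: "nat \<Rightarrow> real \<Rightarrow> real" where
  "psiD n s = (if s > 0 then poly (Qp n) (1/s) * exp (-1/s) else 0)"

lemma poly_exp_lim_top: fixes p :: "real poly" shows "((\<lambda>u. poly p u * exp (-u)) \<longlongrightarrow> 0) at_top"
proof -
  have eq: "(\<lambda>u. poly p u * exp (-u)) = (\<lambda>u. \<Sum>i\<le>degree p. coeff p i * (u ^ i / exp u))"
    by (auto simp: poly_altdef sum_divide_distrib exp_minus field_simps)
  have "((\<lambda>u. \<Sum>i\<le>degree p. coeff p i * (u ^ i / exp u)) \<longlongrightarrow> (\<Sum>i\<le>degree p. coeff p i * 0)) at_top"
    by (intro tendsto_sum tendsto_mult tendsto_const tendsto_power_div_exp_0)
  then show ?thesis unfolding eq by simp
qed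

lemma poly_exp_lim0: fixes p :: "real poly" shows "((\<lambda>h. poly p (1/h) * exp (-1/h)) \<longlongrightarrow> 0) (at_right 0)"
proof -
  have "((\<lambda>h. poly p (inverse h) * exp (- inverse h)) \<longlongrightarrow> 0) (at_right 0)"
    using filterlim_compose[OF poly_exp_lim_top filterlim_inverse_at_top_right] by simp
  then show ?thesis by (simp add: divide_inverse)
qed

lemma psiD_deriv: "(psiD n has_real_derivative psiD (Suc n) s) (at s)"
proof -
  consider "s > 0" | "s < 0" | "s = 0" by linarith
  then show ?thesis
  proof cases
    case 1
    have d: "((\<lambda>s. poly (Qp n) (1/s) * exp (-1/s)) has_real_derivative
        poly (pderiv (Qp n)) (1/s) * (- 1 / s^2) * exp (-1/s) + exp (-1/s) * (1/s^2) * poly (Qp n) (1/s)) (at s)"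
    proof -
      have h1: "((\<lambda>s. 1/s) has_real_derivative (-1/s^2)) (at s)"
        using 1 by (auto intro!: derivative_eq_intros simp: power2_eq_square)
      have h2: "((\<lambda>s. -1/s) has_real_derivative (1/s^2)) (at s)"
        using 1 by (auto intro!: derivative_eq_intros simp: power2_eq_square)
      have p: "((\<lambda>s. poly (Qp n) (1/s)) has_real_derivative poly (pderiv (Qp n)) (1/s) * (- 1 / s^2)) (at s)"
        by (rule DERIV_chain2[OF poly_DERIV h1])
      have q: "((\<lambda>s. exp (-1/s)) has_real_derivative exp (-1/s) * (1/s^2)) (at s)"
        by (rule DERIV_chain2[OF DERIV_exp h2])
      show ?thesis by (rule DERIV_mult[OF p q])
    qed
    have e: "poly (pderiv (Qp n)) (1/s) * (- 1 / s^2) * exp (-1/s) + exp (-1/s) * (1/s^2) * poly (Qp n) (1/s)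
        = psiD (Suc n) s"
      using 1 by (simp add: psiD_def algebra_simps power2_eq_square)
    have d': "((\<lambda>s. poly (Qp n) (1/s) * exp (-1/s)) has_real_derivative psiD (Suc n) s) (at s)"
      using d e by metis
    show ?thesis
      by (rule has_field_derivative_transform_within_open[OF d', where S="{0<..}"])
         (use 1 in \<open>auto simp: psiD_def\<close>)
  next
    case 2
    have d: "((\<lambda>s. 0) has_real_derivative psiD (Suc n) s) (at s)" using 2 by (simp add: psiD_def)
    show ?thesis
      by (rule has_field_derivative_transform_within_open[OF d, where S="{..<0}"])
         (use 2 in \<open>auto simp: psiD_def\<close>)
  next
    case 3
    have r: "((\<lambda>h. (psiD n h - psiD n 0) / (h - 0)) \<longlongrightarrow> 0) (at_right 0)"
    proof -
      have "((\<lambda>h. poly ([:0,1:] * Qp n) (1/h) * exp (-1/h)) \<longlongrightarrow> 0) (at_right 0)"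
        by (rule poly_exp_lim0)
      then show ?thesis
        apply (rule Lim_transform_within[where d=1])
        apply (auto simp: psiD_def)
        done
    qed
    have l: "((\<lambda>h. (psiD n h - psiD n 0) / (h - 0)) \<longlongrightarrow> 0) (at_left 0)"
    proof -
      have "((\<lambda>h. 0::real) \<longlongrightarrow> 0) (at_left 0)" by simp
      then show ?thesis
        apply (rule Lim_transform_within[where d=1])
        apply (auto simp: psiD_def)
        done
    qed
    have "((\<lambda>h. (psiD n h - psiD n 0) / (h - 0)) \<longlongrightarrow> 0) (at 0)"
      using r l by (simp add: filterlim_at_split)
    then have "(psiD n has_real_derivative 0) (at 0)"
      by (simp add: has_field_derivative_iff)
    then show ?thesis using 3 by (simp add: psiD_def)
  qed
qed

lemma psi_funpow: "(deriv ^^ n) psi = psiD n"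
proof (induction n)
  case 0
  show ?case by (auto simp: psi_def psiD_def)
next
  case (Suc n)
  show ?case using Suc by (auto intro!: DERIV_imp_deriv psiD_deriv)
qed

lemma psi_smooth: "(deriv ^^ n) psi differentiable (at x)"
  unfolding psi_funpow using psiD_deriv real_differentiable_def by blast


fun nd :: "nat \<Rightarrow> (real \<Rightarrow> real) \<Rightarrow> bool" where
  "nd 0 f = True"
| "nd (Suc n) f = ((\<forall>x. f differentiable (at x)) \<and> nd n (deriv f))"

lemma nd_mono: "nd (Suc n) f \<Longrightarrow> nd n f"
  by (induction n arbitrary: f) auto


lemma deriv_DERIV: "f differentiable (at x) \<Longrightarrow> (f has_real_derivative deriv f x) (at x)"
  using DERIV_deriv_iff_real_differentiable by blast

lemma funpow_deriv_Suc: "(deriv ^^ Suc m) f = (deriv ^^ m) (deriv f)"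
  by (simp only: funpow_Suc_right comp_def)

lemma deriv_eqI: "(\<And>x. (f has_real_derivative f' x) (at x)) \<Longrightarrow> deriv f = f'"
  by (auto intro!: DERIV_imp_deriv)

lemma nd_iff: "nd (Suc n) f \<longleftrightarrow> (\<forall>m\<le>n. \<forall>x. (deriv ^^ m) f differentiable (at x))"
proof (induction n arbitrary: f)
  case 0
  then show ?case by simp
next
  case (Suc n)
  have "(\<forall>m\<le>Suc n. \<forall>x. (deriv ^^ m) f differentiable (at x)) \<longleftrightarrow>
        (\<forall>x. f differentiable (at x)) \<and> (\<forall>m\<le>n. \<forall>x. (deriv ^^ m) (deriv f) differentiable (at x))"
  proof safe
    fix m x assume a: "\<forall>m\<le>Suc n. \<forall>x. (deriv ^^ m) f differentiable (at x)" and "m \<le> n"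
    then have "Suc m \<le> Suc n" by simp
    then have "(deriv ^^ Suc m) f differentiable (at x)" using a by blast
    then show "(deriv ^^ m) (deriv f) differentiable (at x)"
      by (simp only: funpow_deriv_Suc)
  next
    fix x assume a: "\<forall>m\<le>Suc n. \<forall>x. (deriv ^^ m) f differentiable (at x)"
    then show "f differentiable (at x)" using a[rule_format, of 0 x] by simp
  next
    fix m x assume a: "\<forall>x. f differentiable (at x)" "\<forall>m\<le>n. \<forall>x. (deriv ^^ m) (deriv f) differentiable (at x)"
      and m: "m \<le> Suc n"
    show "(deriv ^^ m) f differentiable (at x)"
    proof (cases m)
      case 0 then show ?thesis using a by simp
    next
      case (Suc k)
      then have "(deriv ^^ k) (deriv f) differentiable (at x)" using a m by simp
      then show ?thesis unfolding Suc by (simp only: funpow_deriv_Suc)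
    qed
  qed
  then show ?case using Suc[of "deriv f"] by simp
qed

lemma Cinf_nd: "(\<forall>n x. (deriv ^^ n) f differentiable (at x)) \<longleftrightarrow> (\<forall>n. nd n f)"
proof
  assume a: "\<forall>n x. (deriv ^^ n) f differentiable (at x)"
  show "\<forall>n. nd n f"
  proof
    fix n show "nd n f" using a by (cases n) (auto simp only: nd_iff nd.simps(1))
  qed
next
  assume a: "\<forall>n. nd n f"
  show "\<forall>n x. (deriv ^^ n) f differentiable (at x)"
    using a[rule_format, of "Suc n" for n] unfolding nd_iff by blast
qed

lemma nd_add: "nd n f \<Longrightarrow> nd n g \<Longrightarrow> nd n (\<lambda>x. f x + g x)"
proof (induction n arbitrary: f g)
  case 0 then show ?case by simp
next
  case (Suc n)
  have e: "deriv (\<lambda>x. f x + g x) = (\<lambda>x. deriv f x + deriv g x)"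
    using Suc.prems by (auto intro!: DERIV_imp_deriv DERIV_add deriv_DERIV)
  show ?case using Suc by (auto simp: e)
qed

lemma nd_const: "nd n (\<lambda>x. c)"
  by (induction n arbitrary: c) auto

lemma nd_id: "nd n (\<lambda>x. x)"
proof -
  have "deriv (\<lambda>x::real. x) = (\<lambda>x. 1)" by (auto intro!: DERIV_imp_deriv derivative_eq_intros)
  then show ?thesis by (cases n) (auto simp: nd_const)
qed

lemma nd_mult: "nd n f \<Longrightarrow> nd n g \<Longrightarrow> nd n (\<lambda>x. f x * g x)"
proof (induction n arbitrary: f g)
  case 0 then show ?case by simp
next
  case (Suc n)
  have e: "deriv (\<lambda>x. f x * g x) = (\<lambda>x. deriv f x * g x + f x * deriv g x)"
  proof
    fix x
    have "((\<lambda>x. f x * g x) has_real_derivative deriv f x * g x + deriv g x * f x) (at x)"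
      using Suc.prems by (intro DERIV_mult deriv_DERIV) auto
    then show "deriv (\<lambda>x. f x * g x) x = deriv f x * g x + f x * deriv g x"
      by (auto dest!: DERIV_imp_deriv simp: mult.commute)
  qed
  have d: "(\<lambda>x. f x * g x) differentiable (at x)" for x
    using Suc.prems by auto
  have "nd n f" "nd n g" using Suc.prems by (auto intro: nd_mono)
  then have "nd n (\<lambda>x. deriv f x * g x + f x * deriv g x)"
    using Suc.prems by (intro nd_add Suc.IH) auto
  then show ?case using d by (auto simp: e)
qed

lemma nd_exp: "nd n h \<Longrightarrow> nd n (\<lambda>x. exp (h x))"
proof (induction n arbitrary: h)
  case 0 then show ?case by simp
next
  case (Suc n)
  have e: "deriv (\<lambda>x. exp (h x)) = (\<lambda>x. deriv h x * exp (h x))"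
    using Suc.prems by (intro deriv_eqI) (auto simp: mult.commute intro!: DERIV_fun_exp[THEN DERIV_cong] deriv_DERIV)
  have "nd n h" using Suc.prems by (rule nd_mono)
  then have "nd n (\<lambda>x. deriv h x * exp (h x))"
    using Suc.prems by (intro nd_mult Suc.IH) auto
  moreover have "(\<lambda>x. exp (h x)) differentiable (at x)" for x
  proof -
    have "h differentiable (at x)" using Suc.prems by simp
    then show ?thesis using DERIV_fun_exp[OF deriv_DERIV] real_differentiable_def by blast
  qed
  ultimately show ?case using Suc.prems by (auto simp: e)
qed

lemma nd_uminus: "nd n f \<Longrightarrow> nd n (\<lambda>x. - f x)"
  using nd_mult[OF nd_const[of n "-1"], of f] by simp

lemma nd_cos_sin: "nd n h \<Longrightarrow> nd n (\<lambda>x. cos (h x)) \<and> nd n (\<lambda>x. sin (h x))"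
proof (induction n arbitrary: h)
  case 0 then show ?case by simp
next
  case (Suc n)
  have e1: "deriv (\<lambda>x. cos (h x)) = (\<lambda>x. - (deriv h x * sin (h x)))"
    using Suc.prems by (intro deriv_eqI) (auto simp: mult.commute intro!: DERIV_fun_cos[THEN DERIV_cong] deriv_DERIV)
  have e2: "deriv (\<lambda>x. sin (h x)) = (\<lambda>x. deriv h x * cos (h x))"
    using Suc.prems by (intro deriv_eqI) (auto simp: mult.commute intro!: DERIV_fun_sin[THEN DERIV_cong] deriv_DERIV)
  have "nd n h" using Suc.prems by (rule nd_mono)
  then have ih: "nd n (\<lambda>x. cos (h x)) \<and> nd n (\<lambda>x. sin (h x))"
    by (intro Suc.IH)
  have "nd n (\<lambda>x. - (deriv h x * sin (h x)))" "nd n (\<lambda>x. deriv h x * cos (h x))"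
    using Suc.prems ih by (auto intro!: nd_mult nd_const nd_uminus)
  moreover have "(\<lambda>x. cos (h x)) differentiable (at x) \<and> (\<lambda>x. sin (h x)) differentiable (at x)" for x
  proof -
    have "h differentiable (at x)" using Suc.prems by simp
    then show ?thesis using DERIV_fun_cos[OF deriv_DERIV] DERIV_fun_sin[OF deriv_DERIV] real_differentiable_def by blast
  qed
  ultimately show ?case using Suc.prems by (auto simp: e1 e2)
qed

lemma nd_affine: "nd n f \<Longrightarrow> nd n (\<lambda>x. f (a * x + b))"
proof (induction n arbitrary: f)
  case 0 then show ?case by simp
next
  case (Suc n)
  have dd: "(f has_real_derivative deriv f (a*x+b)) (at (a*x+b))" for x
    using Suc.prems by (auto intro!: deriv_DERIV)
  have d: "((\<lambda>x. f (a * x + b)) has_real_derivative deriv f (a*x+b) * a) (at x)" for x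
    by (rule DERIV_chain2[where f=f and g="\<lambda>x. a*x+b", OF dd]) (auto intro!: derivative_eq_intros)
  have e: "deriv (\<lambda>x. f (a * x + b)) = (\<lambda>x. deriv f (a*x+b) * a)"
    using d by (auto intro!: DERIV_imp_deriv)
  have "nd n (\<lambda>x. deriv f (a*x+b) * a)"
    using Suc.prems by (auto intro!: nd_mult nd_const Suc.IH)
  then show ?case using d by (auto simp: e real_differentiable_def)
qed


lemma psi_nd: "nd n psi"
  using psi_smooth Cinf_nd by blast

lemma psi_range: "0 \<le> psi s" "psi s \<le> 1"
  by (auto simp: psi_def)

definition rho :: "real \<Rightarrow> real" where
  "rho t = psi (1 + t) * psi (1 - t)"

lemma rho_nd: "nd n rho"
proof -
  have "nd n (\<lambda>t. psi (1 * t + 1) * psi ((-1) * t + 1))"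
    by (intro nd_mult nd_affine psi_nd)
  then show ?thesis unfolding rho_def by (simp add: algebra_simps)
qed

lemma rho_range: "0 \<le> rho t" "rho t \<le> 1"
  using psi_range[of "1+t"] psi_range[of "1-t"] unfolding rho_def
  by (auto intro: mult_le_one)

lemma rho_zero: "1 \<le> \<bar>t\<bar> \<Longrightarrow> rho t = 0"
  by (auto simp: rho_def psi_def)

lemma rho_low: "\<bar>t\<bar> \<le> 1/2 \<Longrightarrow> exp (-4) \<le> rho t"
proof -
  assume t: "\<bar>t\<bar> \<le> 1/2"
  have a: "exp (-2) \<le> psi (1 + t)" using t
    by (auto simp: psi_def field_simps)
  have b: "exp (-2) \<le> psi (1 - t)" using t
    by (auto simp: psi_def field_simps)
  have "exp (-2) * exp (-2) \<le> psi (1 + t) * psi (1 - t)"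
    using a b psi_range by (intro mult_mono) auto
  moreover have "exp (-2) * exp (-2) = exp (-4::real)" by (simp add: mult_exp_exp)
  ultimately show ?thesis by (simp add: rho_def)
qed

definition rho1 :: "real \<Rightarrow> real" where "rho1 = deriv rho"
definition rho2 :: "real \<Rightarrow> real" where "rho2 = deriv rho1"

lemma rho_D: "(rho has_real_derivative rho1 t) (at t)"
  using rho_nd[of 1] unfolding rho1_def by (auto intro: deriv_DERIV)

lemma rho1_D: "(rho1 has_real_derivative rho2 t) (at t)"
  using rho_nd[of 2] unfolding rho1_def rho2_def by (auto simp: numeral_2_eq_2 intro: deriv_DERIV)

lemma rho2_cont: "isCont rho2 t"
proof -
  have "nd 3 rho" by (rule rho_nd)
  then have "rho2 differentiable (at t)" unfolding rho1_def rho2_def by (simp add: numeral_3_eq_3)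
  then show ?thesis by (rule differentiable_imp_continuous_within)
qed

lemma zero_open_deriv:
  assumes "\<And>t. 1 < \<bar>t\<bar> \<Longrightarrow> f t = 0" "(f has_real_derivative D) (at t)" "1 < \<bar>t\<bar>"
  shows "D = 0"
proof -
  have "((\<lambda>t. 0) has_real_derivative 0) (at t)" by simp
  then have "(f has_real_derivative 0) (at t)"
    by (rule has_field_derivative_transform_within_open[where S="{t. 1 < \<bar>t\<bar>}"])
       (use assms in \<open>auto intro!: open_Collect_less continuous_intros\<close>)
  then show ?thesis using assms(2) DERIV_unique by blast
qed

lemma rho1_zero: "1 < \<bar>t\<bar> \<Longrightarrow> rho1 t = 0"
  using zero_open_deriv[OF _ rho_D] rho_zero by auto

lemma rho2_zero: "1 < \<bar>t\<bar> \<Longrightarrow> rho2 t = 0"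
  using zero_open_deriv[OF _ rho1_D] rho1_zero by auto

lemma bound_compact:
  fixes f :: "real \<Rightarrow> real"
  assumes "\<And>t. isCont f t" "\<And>t. 1 < \<bar>t\<bar> \<Longrightarrow> f t = 0"
  shows "\<exists>K. \<forall>t. \<bar>f t\<bar> \<le> K"
proof -
  have "continuous_on {-1..1} (\<lambda>t. \<bar>f t\<bar>)"
    using assms(1) by (intro continuous_intros continuous_at_imp_continuous_on) auto
  then obtain t0 where "t0 \<in> {-1..1}" "\<forall>t\<in>{-1..1}. \<bar>f t\<bar> \<le> \<bar>f t0\<bar>"
    using continuous_attains_sup[of "{-1..1::real}" "\<lambda>t. \<bar>f t\<bar>"] by auto
  then have "\<forall>t. \<bar>f t\<bar> \<le> \<bar>f t0\<bar>"
    using assms(2) by (metis abs_ge_zero abs_le_iff abs_zero atLeastAtMost_iff not_less minus_le_iff)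
  then show ?thesis by blast
qed

lemma rho1_bound: "\<exists>K. \<forall>t. \<bar>rho1 t\<bar> \<le> K"
  using bound_compact[of rho1] rho1_zero rho1_D DERIV_isCont by blast

lemma rho2_bound: "\<exists>K. \<forall>t. \<bar>rho2 t\<bar> \<le> K"
  using bound_compact[of rho2] rho2_zero rho2_cont by blast


abbreviation "stp \<equiv> (\<lambda>b h. if b then dx h else dy h)"

lemma vd_works: "f differentiable (at x) \<Longrightarrow> (f has_vector_derivative vector_derivative f (at x)) (at x)"
  using vector_derivative_works by blast

lemma dx_diff:
  assumes "\<And>x y. (\<lambda>t. f (t,y)) differentiable (at x)" "\<And>x y. (\<lambda>t. g (t,y)) differentiable (at x)"
  shows "dx (\<lambda>z. f z - g z) = (\<lambda>z. dx f z - dx g z)"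
proof
  fix z :: "real \<times> real"
  obtain x y where z: "z = (x,y)" by force
  have "((\<lambda>t. f (t,y) - g (t,y)) has_vector_derivative
      vector_derivative (\<lambda>t. f (t,y)) (at x) - vector_derivative (\<lambda>t. g (t,y)) (at x)) (at x)"
    using assms by (intro has_vector_derivative_diff vd_works)
  then show "dx (\<lambda>z. f z - g z) z = dx f z - dx g z"
    unfolding z dx_def by (simp add: vector_derivative_at)
qed

lemma dy_diff:
  assumes "\<And>x y. (\<lambda>t. f (x,t)) differentiable (at y)" "\<And>x y. (\<lambda>t. g (x,t)) differentiable (at y)"
  shows "dy (\<lambda>z. f z - g z) = (\<lambda>z. dy f z - dy g z)"
proof
  fix z :: "real \<times> real"
  obtain x y where z: "z = (x,y)" by force
  have "((\<lambda>t. f (x,t) - g (x,t)) has_vector_derivative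
      vector_derivative (\<lambda>t. f (x,t)) (at y) - vector_derivative (\<lambda>t. g (x,t)) (at y)) (at y)"
    using assms by (intro has_vector_derivative_diff vd_works)
  then show "dy (\<lambda>z. f z - g z) z = dy f z - dy g z"
    unfolding z dy_def by (simp add: vector_derivative_at)
qed

lemma smooth2_fold: "smooth2 f \<Longrightarrow> smooth2 (fold stp ws f)"
  unfolding smooth2_def
proof (intro allI)
  fix ws'
  assume a: "\<forall>ws. let g = fold stp ws f in continuous_on UNIV g \<and>
        (\<forall>x y. (\<lambda>t. g (t, y)) differentiable at x \<and> (\<lambda>t. g (x, t)) differentiable at y)"
  have e: "fold stp ws' (fold stp ws f) = fold stp (ws @ ws') f" by simp
  show "let g = fold stp ws' (fold stp ws f) in continuous_on UNIV g \<and>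
        (\<forall>x y. (\<lambda>t. g (t, y)) differentiable at x \<and> (\<lambda>t. g (x, t)) differentiable at y)"
    unfolding e using a by blast
qed

lemma smooth2_step: "smooth2 f \<Longrightarrow> smooth2 (stp b f)"
  using smooth2_fold[of f "[b]"] by simp

lemma smooth2_base:
  assumes "smooth2 f"
  shows "continuous_on UNIV f" "\<And>x y. (\<lambda>t. f (t,y)) differentiable (at x)"
     "\<And>x y. (\<lambda>t. f (x,t)) differentiable (at y)"
  using assms unfolding smooth2_def by (auto dest!: spec[of _ "[]"])


lemma smooth2_prod:
  fixes A Bf :: "nat \<Rightarrow> real \<Rightarrow> complex"
  assumes dA: "\<And>n x. (A n has_vector_derivative A (Suc n) x) (at x)"
    and dB: "\<And>n x. (Bf n has_vector_derivative Bf (Suc n) x) (at x)"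
  shows "smooth2 (\<lambda>(x,y). A 0 x * Bf 0 y)"
proof -
  define F where "F p q = (\<lambda>(x,y). A p x * Bf q y)" for p q
  have dxF: "dx (F p q) = F (Suc p) q" for p q
  proof
    fix z :: "real \<times> real"
    obtain x y where z: "z = (x,y)" by force
    have "((\<lambda>t. A p t * Bf q y) has_vector_derivative A (Suc p) x * Bf q y) (at x)"
      by (intro has_vector_derivative_mult_left dA)
    then show "dx (F p q) z = F (Suc p) q z"
      unfolding z dx_def F_def by (simp add: vector_derivative_at)
  qed
  have dyF: "dy (F p q) = F p (Suc q)" for p q
  proof
    fix z :: "real \<times> real"
    obtain x y where z: "z = (x,y)" by force
    have "((\<lambda>t. A p x * Bf q t) has_vector_derivative A p x * Bf (Suc q) y) (at y)"
      by (intro has_vector_derivative_mult_right dB)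
    then show "dy (F p q) z = F p (Suc q) z"
      unfolding z dy_def F_def by (simp add: vector_derivative_at)
  qed
  have fo: "\<forall>p q. \<exists>p' q'. fold stp ws (F p q) = F p' q'" for ws
  proof (induction ws)
    case Nil then show ?case by auto
  next
    case (Cons b ws)
    show ?case
    proof (intro allI)
      fix p q
      show "\<exists>p' q'. fold stp (b # ws) (F p q) = F p' q'"
        using Cons[rule_format, of "if b then Suc p else p" "if b then q else Suc q"]
        by (cases b) (auto simp: dxF dyF)
    qed
  qed
  have cA: "isCont (A p) x" for p x using dA has_vector_derivative_continuous by blast
  have cB: "isCont (Bf p) x" for p x using dB has_vector_derivative_continuous by blast
  have good: "continuous_on UNIV (F p q) \<and>
       (\<forall>x y. (\<lambda>t. F p q (t, y)) differentiable at x \<and> (\<lambda>t. F p q (x, t)) differentiable at y)" for p q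
  proof (intro conjI allI)
    have "isCont (\<lambda>z. A p (fst z) * Bf q (snd z)) z" for z
      by (intro continuous_intros isCont_o2[OF _ cA] isCont_o2[OF _ cB])
    moreover have "F p q = (\<lambda>z. A p (fst z) * Bf q (snd z))" by (auto simp: F_def)
    ultimately show "continuous_on UNIV (F p q)"
      by (simp add: continuous_at_imp_continuous_on)
  next
    fix x y
    show "(\<lambda>t. F p q (t, y)) differentiable at x"
      unfolding F_def by (auto intro!: differentiableI_vector has_vector_derivative_mult_left dA)
    show "(\<lambda>t. F p q (x, t)) differentiable at y"
      unfolding F_def by (auto intro!: differentiableI_vector has_vector_derivative_mult_right dB)
  qed
  have "smooth2 (F 0 0)"
    unfolding smooth2_def Let_def
  proof
    fix ws
    obtain p' q' where "fold stp ws (F 0 0) = F p' q'" using fo by blast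
    then show "continuous_on UNIV (fold stp ws (F 0 0)) \<and>
         (\<forall>x y. (\<lambda>t. fold stp ws (F 0 0) (t, y)) differentiable at x \<and>
                (\<lambda>t. fold stp ws (F 0 0) (x, t)) differentiable at y)"
      using good by simp
  qed
  then show ?thesis by (simp add: F_def)
qed


definition sc :: "real \<Rightarrow> real \<Rightarrow> real \<Rightarrow> real" where "sc c L x = rho ((x - c)/L)"
definition sc1 :: "real \<Rightarrow> real \<Rightarrow> real \<Rightarrow> real" where "sc1 c L x = rho1 ((x - c)/L) / L"
definition sc2 :: "real \<Rightarrow> real \<Rightarrow> real \<Rightarrow> real" where "sc2 c L x = rho2 ((x - c)/L) / L^2"

lemma sc_D: "L \<noteq> 0 \<Longrightarrow> (sc c L has_real_derivative sc1 c L x) (at x)"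
proof -
  assume L: "L \<noteq> 0"
  have g: "((\<lambda>x. (x - c)/L) has_real_derivative 1/L) (at x)"
    using L by (auto intro!: derivative_eq_intros)
  show ?thesis
    using DERIV_chain2[where f=rho and g="\<lambda>x. (x - c)/L", OF rho_D g] L
    unfolding sc_def sc1_def by simp
qed

lemma sc1_D: "L \<noteq> 0 \<Longrightarrow> (sc1 c L has_real_derivative sc2 c L x) (at x)"
proof -
  assume L: "L \<noteq> 0"
  have g: "((\<lambda>x. (x - c)/L) has_real_derivative 1/L) (at x)"
    using L by (auto intro!: derivative_eq_intros)
  have "((\<lambda>x. rho1 ((x - c)/L) / L) has_real_derivative rho2 ((x - c)/L) * (1/L) / L) (at x)"
    using DERIV_chain2[where f=rho1 and g="\<lambda>x. (x - c)/L", OF rho1_D g]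
    by (intro DERIV_cdivide)
  then show ?thesis using L
    unfolding sc1_def sc2_def by (simp add: power2_eq_square)
qed

lemma sc_nd: "nd n (sc c L)"
proof -
  have "nd n (\<lambda>x. rho ((1/L) * x + (- c/L)))" by (intro nd_affine rho_nd)
  then show ?thesis unfolding sc_def by (simp add: diff_divide_distrib)
qed

definition Gs :: "real \<Rightarrow> real \<Rightarrow> real \<Rightarrow> real" where "Gs nu y0 y = exp (-(nu/2) * (y - y0)^2)"
definition G1 :: "real \<Rightarrow> real \<Rightarrow> real \<Rightarrow> real" where "G1 nu y0 y = -nu * (y - y0) * Gs nu y0 y"
definition G2 :: "real \<Rightarrow> real \<Rightarrow> real \<Rightarrow> real" where "G2 nu y0 y = (nu^2 * (y - y0)^2 - nu) * Gs nu y0 y"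

lemma Gs_D: "(Gs nu y0 has_real_derivative G1 nu y0 y) (at y)"
  unfolding Gs_def G1_def
  by (auto intro!: derivative_eq_intros simp: power2_eq_square algebra_simps)

lemma G1_D: "(G1 nu y0 has_real_derivative G2 nu y0 y) (at y)"
proof -
  have d1: "((\<lambda>y. -nu * (y - y0)) has_real_derivative -nu) (at y)"
    by (auto intro!: derivative_eq_intros)
  have e: "G1 nu y0 = (\<lambda>y. -nu * (y - y0) * Gs nu y0 y)" by (auto simp: G1_def)
  have eq: "-nu * Gs nu y0 y + G1 nu y0 y * (-nu * (y - y0)) = G2 nu y0 y"
    by (simp add: G1_def G2_def power2_eq_square algebra_simps)
  show ?thesis unfolding e
    by (rule DERIV_cong[OF DERIV_mult[OF d1 Gs_D] eq])
qed

lemma nd_diff: "nd n f \<Longrightarrow> nd n g \<Longrightarrow> nd n (\<lambda>x. f x - g x)"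
  using nd_add[OF _ nd_uminus, of n f g] by simp

lemma Gs_nd: "nd n (Gs nu y0)"
proof -
  have "nd n (\<lambda>y. exp ((-(nu/2)) * ((y - y0) * (y - y0))))"
    by (intro nd_exp nd_mult nd_const nd_diff nd_id)
  then show ?thesis unfolding Gs_def[abs_def] by (simp add: power2_eq_square)
qed

definition gg where "gg nu y0 R y = Gs nu y0 y * sc y0 R y"
definition gg1 where "gg1 nu y0 R y = G1 nu y0 y * sc y0 R y + Gs nu y0 y * sc1 y0 R y"
definition gg2 where "gg2 nu y0 R y = G2 nu y0 y * sc y0 R y + 2 * G1 nu y0 y * sc1 y0 R y + Gs nu y0 y * sc2 y0 R y"

lemma gg_D: "R \<noteq> 0 \<Longrightarrow> (gg nu y0 R has_real_derivative gg1 nu y0 R y) (at y)"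
  unfolding gg_def[abs_def] gg1_def
  by (rule DERIV_cong[OF DERIV_mult[OF Gs_D sc_D]]) (auto simp: algebra_simps)

lemma gg1_D: "R \<noteq> 0 \<Longrightarrow> (gg1 nu y0 R has_real_derivative gg2 nu y0 R y) (at y)"
  unfolding gg1_def[abs_def] gg2_def
  by (rule DERIV_cong[OF DERIV_add[OF DERIV_mult[OF G1_D sc_D] DERIV_mult[OF Gs_D sc1_D]]])
     algebra

lemma gg_nd: "nd n (gg nu y0 R)"
  unfolding gg_def[abs_def] by (intro nd_mult Gs_nd sc_nd)

lemma cis_alt: "cis a = complex_of_real (cos a) + \<i> * complex_of_real (sin a)"
  by (simp add: complex_eq_iff)

lemma cis_D: "((\<lambda>x. cis (k*x)) has_vector_derivative \<i> * complex_of_real k * cis (k*x)) (at x)"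
proof -
  have "((\<lambda>x. complex_of_real (cos (k*x)) + \<i> * complex_of_real (sin (k*x))) has_vector_derivative
      complex_of_real (- sin (k*x) * k) + \<i> * complex_of_real (cos (k*x) * k)) (at x)"
    by (intro has_vector_derivative_add has_vector_derivative_mult_right has_vector_derivative_of_real)
       (auto intro!: derivative_eq_intros)
  moreover have "complex_of_real (- sin (k*x) * k) + \<i> * complex_of_real (cos (k*x) * k) = \<i> * complex_of_real k * cis (k*x)"
    by (simp add: complex_eq_iff)
  ultimately show ?thesis unfolding cis_alt by simp
qed

lemma cis_mult_D:
  assumes "(h has_vector_derivative h') (at x)"
  shows "((\<lambda>x. cis (k*x) * h x) has_vector_derivative cis (k*x) * (\<i> * complex_of_real k * h x + h')) (at x)"
proof -
  have D: "((\<lambda>x. cis (k*x) * h x) has_vector_derivative cis (k*x) * h' + \<i> * complex_of_real k * cis (k*x) * h x) (at x)"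
    by (rule has_vector_derivative_mult[OF cis_D assms])
  have eq: "cis (k*x) * h' + \<i> * complex_of_real k * cis (k*x) * h x = cis (k*x) * (\<i> * complex_of_real k * h x + h')"
    by (simp add: algebra_simps)
  show ?thesis using D eq by metis
qed

definition aa where "aa k L x = cis (k*x) * complex_of_real (sc (2*L) L x)"
definition aa1 where "aa1 k L x = cis (k*x) * (\<i> * complex_of_real k * complex_of_real (sc (2*L) L x) + complex_of_real (sc1 (2*L) L x))"
definition aa2 where "aa2 k L x = cis (k*x) * (- complex_of_real (k*k) * complex_of_real (sc (2*L) L x)
    + 2 * \<i> * complex_of_real k * complex_of_real (sc1 (2*L) L x) + complex_of_real (sc2 (2*L) L x))"

lemma aa_D: "L \<noteq> 0 \<Longrightarrow> (aa k L has_vector_derivative aa1 k L x) (at x)"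
  unfolding aa_def[abs_def] aa1_def
  by (intro cis_mult_D has_vector_derivative_of_real sc_D)

lemma aa1_D: "L \<noteq> 0 \<Longrightarrow> (aa1 k L has_vector_derivative aa2 k L x) (at x)"
proof -
  assume L: "L \<noteq> 0"
  have "((\<lambda>x. \<i> * complex_of_real k * complex_of_real (sc (2*L) L x) + complex_of_real (sc1 (2*L) L x))
     has_vector_derivative \<i> * complex_of_real k * complex_of_real (sc1 (2*L) L x) + complex_of_real (sc2 (2*L) L x)) (at x)"
    using L by (intro has_vector_derivative_add has_vector_derivative_mult_right has_vector_derivative_of_real sc_D sc1_D)
  from cis_mult_D[OF this, of k] show ?thesis
    unfolding aa1_def[abs_def] aa2_def
    apply (rule back_subst[where P="\<lambda>v. (_ has_vector_derivative v) (at x)"])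
    apply (simp add: algebra_simps power2_eq_square)
    done
qed


lemma fold_diff:
  "smooth2 f \<Longrightarrow> smooth2 g \<Longrightarrow> fold stp ws (\<lambda>z. f z - g z) = (\<lambda>z. fold stp ws f z - fold stp ws g z)"
proof (induction ws arbitrary: f g)
  case Nil
  then show ?case by simp
next
  case (Cons b ws)
  have e: "stp b (\<lambda>z. f z - g z) = (\<lambda>z. stp b f z - stp b g z)"
    using smooth2_base[OF Cons.prems(1)] smooth2_base[OF Cons.prems(2)]
    by (auto intro!: dx_diff dy_diff)
  show ?case
    using Cons.IH[OF smooth2_step[OF Cons.prems(1)] smooth2_step[OF Cons.prems(2)], of b]
    by (simp add: e)
qed

lemma smooth2_diff:
  assumes f: "smooth2 f" and g: "smooth2 g"
  shows "smooth2 (\<lambda>z. f z - g z)"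
  unfolding smooth2_def Let_def
proof
  fix ws :: "bool list"
  have e: "fold stp ws (\<lambda>z. f z - g z) = (\<lambda>z. fold stp ws f z - fold stp ws g z)"
    by (rule fold_diff[OF f g])
  note a = smooth2_base[OF smooth2_fold[OF f, of ws]] and b = smooth2_base[OF smooth2_fold[OF g, of ws]]
  show "continuous_on UNIV (fold stp ws (\<lambda>z. f z - g z)) \<and>
         (\<forall>x y. (\<lambda>t. fold stp ws (\<lambda>z. f z - g z) (t, y)) differentiable at x \<and>
                (\<lambda>t. fold stp ws (\<lambda>z. f z - g z) (x, t)) differentiable at y)"
    unfolding e using a b by (auto intro!: continuous_on_diff differentiable_diff)
qed

lemma test_fn_diff:
  assumes "test_fn f" "test_fn g"
  shows "test_fn (\<lambda>z. f z - g z)"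
proof -
  have "bounded {z. f z \<noteq> 0}" "bounded {z. g z \<noteq> 0}"
    using assms unfolding test_fn_def by auto
  then have "bounded ({z. f z \<noteq> 0} \<union> {z. g z \<noteq> 0})" by auto
  then have "bounded {z. f z - g z \<noteq> 0}"
    by (rule bounded_subset) auto
  then show ?thesis using assms smooth2_diff unfolding test_fn_def by auto
qed


lemma Dmag_diff_gen:
  assumes "\<And>x y. (\<lambda>t. f (t,y)) differentiable (at x)" "\<And>x y. (\<lambda>t. g (t,y)) differentiable (at x)"
  shows "Dmag B (\<lambda>z. f z - g z) = (\<lambda>z. Dmag B f z - Dmag B g z)"
  unfolding Dmag_def dx_diff[OF assms] by (auto simp: algebra_simps)

lemma Dmag_diff:
  assumes "smooth2 f" "smooth2 g"
  shows "Dmag B (\<lambda>z. f z - g z) = (\<lambda>z. Dmag B f z - Dmag B g z)"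
  using smooth2_base[OF assms(1)] smooth2_base[OF assms(2)]
  by (intro Dmag_diff_gen)

lemma Dmag_pdiff:
  assumes "smooth2 f"
  shows "(\<lambda>t. Dmag B f (t,y)) differentiable (at x)"
proof -
  have "(\<lambda>t. dx f (t,y)) differentiable (at x)"
    using smooth2_base(2)[OF smooth2_step[OF assms, of True]] by simp
  moreover have "(\<lambda>t. f (t,y)) differentiable (at x)"
    using smooth2_base(2)[OF assms] by simp
  ultimately show ?thesis unfolding Dmag_def
    by (auto intro!: differentiable_diff differentiable_mult differentiable_const)
qed

lemma Hop_diff:
  assumes "test_fn f" "test_fn g"
  shows "Hop B w lam V (\<lambda>z. f z - g z) = (\<lambda>z. Hop B w lam V f z - Hop B w lam V g z)"
proof -
  have sf: "smooth2 f" and sg: "smooth2 g" using assms test_fn_def by auto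
  have e1: "Dmag B (Dmag B (\<lambda>z. f z - g z)) = (\<lambda>z. Dmag B (Dmag B f) z - Dmag B (Dmag B g) z)"
    unfolding Dmag_diff[OF sf sg]
    by (rule Dmag_diff_gen[OF Dmag_pdiff[OF sf] Dmag_pdiff[OF sg]])
  have e2: "dy (dy (\<lambda>z. f z - g z)) = (\<lambda>z. dy (dy f) z - dy (dy g) z)"
    using smooth2_base(3)[OF sf] smooth2_base(3)[OF sg]
      smooth2_base(3)[OF smooth2_step[OF sf, of False]] smooth2_base(3)[OF smooth2_step[OF sg, of False]]
    by (simp add: dy_diff)
  show ?thesis
    unfolding Hop_def e1 e2 by (auto simp: algebra_simps)
qed


lemma sq_bound: "(cmod (a - b))^2 \<le> 2*(cmod a)^2 + 2*(cmod b)^2"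
proof -
  have "cmod (a - b) \<le> cmod a + cmod b" by (rule norm_triangle_ineq4)
  then have "(cmod (a - b))^2 \<le> (cmod a + cmod b)^2"
    by (intro power_mono) auto
  also have "\<dots> \<le> 2*(cmod a)^2 + 2*(cmod b)^2"
    using sum_squares_ge_zero[of "cmod a - cmod b" 0] by (simp add: power2_eq_square algebra_simps)
  finally show ?thesis .
qed

lemma L2_diff:
  assumes "f \<in> L2" "g \<in> L2"
  shows "(\<lambda>z. f z - g z) \<in> L2"
proof -
  have m: "(\<lambda>z. f z - g z) \<in> borel_measurable lborel" using assms by (auto simp: L2_def)
  have i: "integrable lborel (\<lambda>z. 2*(cmod (f z))^2 + 2*(cmod (g z))^2)"
    using assms by (auto simp: L2_def)
  have "integrable lborel (\<lambda>z. (cmod (f z - g z))^2)"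
    apply (rule Bochner_Integration.integrable_bound[OF i])
    using m apply measurable
    using sq_bound by (auto intro!: AE_I2 simp: abs_of_nonneg)
  then show ?thesis using m by (simp add: L2_def)
qed

lemma L2_cmult:
  assumes "f \<in> L2"
  shows "(\<lambda>z. c * f z) \<in> L2"
proof -
  have "integrable lborel (\<lambda>z. (cmod c)^2 * (cmod (f z))^2)"
    using assms by (auto simp: L2_def)
  then show ?thesis using assms by (auto simp: L2_def norm_mult power_mult_distrib)
qed

lemma L2norm_nonneg: "L2norm f \<ge> 0"
  by (auto simp: L2norm_def)

lemma L2norm_cong_AE:
  assumes "f \<in> L2" "g \<in> L2" "AE z in lborel. f z = g z"
  shows "L2norm f = L2norm g"
proof -
  have "(\<integral>z. (cmod (f z))^2 \<partial>lborel) = (\<integral>z. (cmod (g z))^2 \<partial>lborel)"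
    apply (rule integral_cong_AE)
    using assms by (auto simp: L2_def elim!: AE_mp)
  then show ?thesis by (simp add: L2norm_def)
qed

lemma L2norm_swap: "L2norm (\<lambda>z. a z - b z) = L2norm (\<lambda>z. b z - a z)"
  by (simp add: L2norm_def norm_minus_commute)

lemma closure_graph_self:
  assumes "test_fn u" "u \<in> L2" "T u \<in> L2"
  shows "closure_graph T u (T u)"
  unfolding closure_graph_def using assms
  by (auto intro!: exI[of _ "\<lambda>n. u"] simp: L2norm_def)

lemma closure_graph_sub:
  assumes lin: "\<And>f g. test_fn f \<Longrightarrow> test_fn g \<Longrightarrow> T (\<lambda>z. f z - g z) = (\<lambda>z. T f z - T g z)"
    and G: "closure_graph T f g" and u: "test_fn u" "u \<in> L2" "T u \<in> L2"
  shows "closure_graph T (\<lambda>z. u z - f z) (\<lambda>z. T u z - g z)"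
proof -
  obtain \<phi> where \<phi>: "\<forall>n. test_fn (\<phi> n)" "(\<lambda>n. L2norm (\<lambda>z. \<phi> n z - f z)) \<longlonglongrightarrow> 0"
    "(\<lambda>n. L2norm (\<lambda>z. T (\<phi> n) z - g z)) \<longlonglongrightarrow> 0" and fg: "f \<in> L2" "g \<in> L2"
    using G unfolding closure_graph_def by blast
  define \<psi> where "\<psi> n = (\<lambda>z. u z - \<phi> n z)" for n
  have t: "test_fn (\<psi> n)" for n unfolding \<psi>_def using \<phi> u by (auto intro: test_fn_diff)
  have e1: "L2norm (\<lambda>z. \<psi> n z - (u z - f z)) = L2norm (\<lambda>z. \<phi> n z - f z)" for n
    using L2norm_swap[of "\<lambda>z. \<phi> n z" f] by (simp add: \<psi>_def)
  have e2: "L2norm (\<lambda>z. T (\<psi> n) z - (T u z - g z)) = L2norm (\<lambda>z. T (\<phi> n) z - g z)" for n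
    using L2norm_swap[of "\<lambda>z. T (\<phi> n) z" g] lin[OF u(1) \<phi>(1)[rule_format, of n]]
    by (simp add: \<psi>_def)
  show ?thesis unfolding closure_graph_def
    using t \<phi> e1 e2 L2_diff[OF u(2) fg(1)] L2_diff[OF u(3) fg(2)]
    by (intro conjI exI[of _ \<psi>]) auto
qed

lemma not_resolvent:
  assumes lin: "\<And>f g. test_fn f \<Longrightarrow> test_fn g \<Longrightarrow> T (\<lambda>z. f z - g z) = (\<lambda>z. T f z - T g z)"
    and W: "\<And>e. e > 0 \<Longrightarrow> \<exists>u. test_fn u \<and> u \<in> L2 \<and> T u \<in> L2 \<and> L2norm u > 0 \<and>
              L2norm (\<lambda>p. T u p - z * u p) \<le> e * L2norm u"
  shows "\<not> in_resolvent (closure_graph T) z"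
proof
  assume "in_resolvent (closure_graph T) z"
  then obtain C where C: "\<forall>h\<in>L2. \<exists>f g. closure_graph T f g \<and> (AE p in lborel. g p - z * f p = h p)
        \<and> L2norm f \<le> C * L2norm h"
    and inj: "\<forall>f g. closure_graph T f g \<and> (AE p in lborel. g p = z * f p) \<longrightarrow> (AE p in lborel. f p = 0)"
    unfolding in_resolvent_def by blast
  define e where "e = 1 / (\<bar>C\<bar> + 1)"
  have e: "e > 0" unfolding e_def by simp
  obtain u where u: "test_fn u" "u \<in> L2" "T u \<in> L2" "L2norm u > 0"
      "L2norm (\<lambda>p. T u p - z * u p) \<le> e * L2norm u"
    using W[OF e] by blast
  define h where "h = (\<lambda>p. T u p - z * u p)"
  have hL: "h \<in> L2" unfolding h_def by (intro L2_diff L2_cmult u)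
  obtain f g where fg: "closure_graph T f g" "AE p in lborel. g p - z * f p = h p" "L2norm f \<le> C * L2norm h"
    using C hL by blast
  have fL: "f \<in> L2" using fg(1) by (simp add: closure_graph_def)
  have G2: "closure_graph T (\<lambda>p. u p - f p) (\<lambda>p. T u p - g p)"
    by (rule closure_graph_sub[OF lin fg(1) u(1-3)])
  have "AE p in lborel. T u p - g p = z * (u p - f p)"
    using fg(2) by (auto simp: h_def algebra_simps elim!: AE_mp)
  then have "AE p in lborel. u p - f p = 0" using inj G2 by blast
  then have "AE p in lborel. u p = f p" by (auto elim!: AE_mp)
  then have "L2norm u = L2norm f" by (rule L2norm_cong_AE[OF u(2) fL])
  also have "\<dots> \<le> C * L2norm h" by (rule fg(3))
  also have "\<dots> \<le> \<bar>C\<bar> * L2norm h" using L2norm_nonneg[of h] by (intro mult_right_mono) auto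
  also have "\<dots> \<le> \<bar>C\<bar> * (e * L2norm u)" using u(5) unfolding h_def by (intro mult_left_mono) auto
  also have "\<dots> = (\<bar>C\<bar> / (\<bar>C\<bar> + 1)) * L2norm u" by (simp add: e_def)
  also have "\<dots> < L2norm u" using u(4) by (simp add: divide_less_eq)
  finally show False by simp
qed


lemma dx_prod:
  assumes "\<And>x. (a has_vector_derivative a' x) (at x)"
  shows "dx (\<lambda>(x,y). a x * b y) = (\<lambda>(x,y). a' x * b y)"
proof
  fix z :: "real \<times> real"
  obtain x y where z: "z = (x,y)" by force
  have "((\<lambda>t. a t * b y) has_vector_derivative a' x * b y) (at x)"
    by (intro has_vector_derivative_mult_left assms)
  then show "dx (\<lambda>(x,y). a x * b y) z = (\<lambda>(x,y). a' x * b y) z"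
    unfolding z dx_def by (simp add: vector_derivative_at)
qed

lemma dy_prod:
  assumes "\<And>y. (b has_vector_derivative b' y) (at y)"
  shows "dy (\<lambda>(x,y). a x * b y) = (\<lambda>(x,y). a x * b' y)"
proof
  fix z :: "real \<times> real"
  obtain x y where z: "z = (x,y)" by force
  have "((\<lambda>t. a x * b t) has_vector_derivative a x * b' y) (at y)"
    by (intro has_vector_derivative_mult_right assms)
  then show "dy (\<lambda>(x,y). a x * b y) z = (\<lambda>(x,y). a x * b' y) z"
    unfolding z dy_def by (simp add: vector_derivative_at)
qed

definition uu where "uu k L nu y0 R = (\<lambda>(x,y). aa k L x * complex_of_real (gg nu y0 R y))"

lemma gg_vD: "R \<noteq> 0 \<Longrightarrow> ((\<lambda>y. complex_of_real (gg nu y0 R y)) has_vector_derivative complex_of_real (gg1 nu y0 R y)) (at y)"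
  by (intro has_vector_derivative_of_real gg_D)

lemma gg1_vD: "R \<noteq> 0 \<Longrightarrow> ((\<lambda>y. complex_of_real (gg1 nu y0 R y)) has_vector_derivative complex_of_real (gg2 nu y0 R y)) (at y)"
  by (intro has_vector_derivative_of_real gg1_D)

lemma Hop_uu:
  assumes L: "L \<noteq> 0" and R: "R \<noteq> 0"
  shows "Hop B w lam V (uu k L nu y0 R) (x,y) =
    \<i> * (\<i> * (aa2 k L x * gg nu y0 R y) - complex_of_real (B*y) * (aa1 k L x * gg nu y0 R y))
    - complex_of_real (B*y) * (\<i> * (aa1 k L x * gg nu y0 R y) - complex_of_real (B*y) * (aa k L x * gg nu y0 R y))
    - aa k L x * gg2 nu y0 R y
    + complex_of_real (w^2 * y^2 + lam * y^2 * V (x*y)) * (aa k L x * gg nu y0 R y)"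
proof -
  let ?g = "\<lambda>y. complex_of_real (gg nu y0 R y)"
  have du: "dx (uu k L nu y0 R) = (\<lambda>(x,y). aa1 k L x * ?g y)"
    unfolding uu_def by (rule dx_prod[OF aa_D[OF L]])
  have dyu: "dy (uu k L nu y0 R) = (\<lambda>(x,y). aa k L x * complex_of_real (gg1 nu y0 R y))"
    unfolding uu_def by (rule dy_prod[OF gg_vD[OF R]])
  have dyyu: "dy (dy (uu k L nu y0 R)) = (\<lambda>(x,y). aa k L x * complex_of_real (gg2 nu y0 R y))"
    unfolding dyu by (rule dy_prod[OF gg1_vD[OF R]])
  have Dm: "Dmag B (uu k L nu y0 R) = (\<lambda>(x,y). \<i> * (aa1 k L x * ?g y) - complex_of_real (B*y) * (aa k L x * ?g y))"
    unfolding Dmag_def du by (simp add: uu_def)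
  have dxDm: "dx (Dmag B (uu k L nu y0 R)) (x,y) = \<i> * (aa2 k L x * ?g y) - complex_of_real (B*y) * (aa1 k L x * ?g y)"
  proof -
    have "((\<lambda>t. \<i> * (aa1 k L t * ?g y) - complex_of_real (B*y) * (aa k L t * ?g y)) has_vector_derivative
        \<i> * (aa2 k L x * ?g y) - complex_of_real (B*y) * (aa1 k L x * ?g y)) (at x)"
      by (intro has_vector_derivative_diff has_vector_derivative_mult_right has_vector_derivative_mult_left
          aa_D aa1_D L)
    then show ?thesis unfolding Dm dx_def by (simp add: vector_derivative_at)
  qed
  have h1: "Hop B w lam V (uu k L nu y0 R) (x,y) = Dmag B (Dmag B (uu k L nu y0 R)) (x,y)
     - dy (dy (uu k L nu y0 R)) (x,y) + complex_of_real (w^2 * y^2 + lam * y^2 * V (x*y)) * uu k L nu y0 R (x,y)"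
    by (simp add: Hop_def)
  have h2: "Dmag B (Dmag B (uu k L nu y0 R)) (x,y) = \<i> * dx (Dmag B (uu k L nu y0 R)) (x,y)
      - complex_of_real (B*y) * Dmag B (uu k L nu y0 R) (x,y)"
    by (simp add: Dmag_def[of B "Dmag B (uu k L nu y0 R)"])
  have Dm': "Dmag B (uu k L nu y0 R) (x,y) = \<i> * (aa1 k L x * ?g y) - complex_of_real (B*y) * (aa k L x * ?g y)"
    unfolding Dm by simp
  have dyy': "dy (dy (uu k L nu y0 R)) (x,y) = aa k L x * complex_of_real (gg2 nu y0 R y)"
    unfolding dyyu by simp
  have uu': "uu k L nu y0 R (x,y) = aa k L x * ?g y" by (simp add: uu_def)
  show ?thesis
    unfolding h1 h2 dxDm Dm' dyy' uu' by simp
qed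


lemma alg_gen:
  fixes j C c d e g h k b p z :: complex
  assumes "j * j = -1"
  shows "j * (j * (C * (- (k*k) * c + 2 * j * k * d + e) * g)
        - b * (C * (j * k * c + d) * g))
     - b * (j * (C * (j * k * c + d) * g) - b * (C * c * g))
     - C * c * h + p * (C * c * g) - z * (C * c * g)
     = C * ((c * (- h + ((k + b)^2 + p - z) * g) - e * g) + j * (-2 * (k + b) * d * g))"
  using assms by algebra

lemma alg1:
  fixes C :: complex and c c1 c2 g g2 k b p z :: real
  shows "\<i> * (\<i> * (C * (- complex_of_real (k*k) * complex_of_real c + 2 * \<i> * complex_of_real k * complex_of_real c1 + complex_of_real c2) * complex_of_real g)
        - complex_of_real b * (C * (\<i> * complex_of_real k * complex_of_real c + complex_of_real c1) * complex_of_real g))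
     - complex_of_real b * (\<i> * (C * (\<i> * complex_of_real k * complex_of_real c + complex_of_real c1) * complex_of_real g)
        - complex_of_real b * (C * complex_of_real c * complex_of_real g))
     - C * complex_of_real c * complex_of_real g2 + complex_of_real p * (C * complex_of_real c * complex_of_real g)
     - complex_of_real z * (C * complex_of_real c * complex_of_real g)
     = C * (complex_of_real (c * (- g2 + ((k + b)^2 + p - z) * g) - c2 * g) + \<i> * complex_of_real (-2 * (k + b) * c1 * g))"
  using alg_gen[where j="\<i>" and C=C and c="complex_of_real c" and d="complex_of_real c1" and e="complex_of_real c2" and g="complex_of_real g"
      and h="complex_of_real g2" and k="complex_of_real k" and b="complex_of_real b" and p="complex_of_real p" and z="complex_of_real z"]
  by simp


lemma measure_box2:
  fixes a1 a2 b1 b2 :: real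
  assumes "a1 \<le> b1" "a2 \<le> b2"
  shows "measure lborel (cbox (a1,a2) (b1,b2)) = (b1 - a1) * (b2 - a2)"
  using assms by (simp add: measure_lborel_cbox_eq Basis_prod_def)

lemma L2_of_bound:
  fixes f :: fn2
  assumes m: "f \<in> borel_measurable lborel" and b: "\<And>p. cmod (f p) \<le> c * indicator (cbox a b) p"
  shows "f \<in> L2" "(\<integral>p. (cmod (f p))^2 \<partial>lborel) \<le> c^2 * measure lborel (cbox a b)"
proof -
  have ii: "integrable lborel (\<lambda>p. c^2 * indicator (cbox a b) p :: real)"
    by (intro integrable_mult_right) (use emeasure_lborel_cbox_finite[of a b] in \<open>simp add: integrable_indicator_iff\<close>)
  have bd: "(cmod (f p))^2 \<le> c^2 * indicator (cbox a b) p" for p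
  proof -
    have "0 \<le> c * indicator (cbox a b) p" using b[of p] norm_ge_zero order_trans by blast
    then have "(cmod (f p))^2 \<le> (c * indicator (cbox a b) p)^2"
      using b[of p] by (intro power_mono) auto
    moreover have "(c * indicator (cbox a b) p)^2 = c^2 * indicator (cbox a b) p"
      by (auto simp: indicator_def power_mult_distrib)
    ultimately show ?thesis by simp
  qed
  have i2: "integrable lborel (\<lambda>p. (cmod (f p))^2)"
    apply (rule Bochner_Integration.integrable_bound[OF ii])
    using m apply measurable
    using bd by (auto intro!: AE_I2)
  then show "f \<in> L2" using m by (simp add: L2_def)
  have "(\<integral>p. (cmod (f p))^2 \<partial>lborel) \<le> (\<integral>p. c^2 * indicator (cbox a b) p \<partial>lborel)"
    by (intro integral_mono i2 ii bd)
  also have "\<dots> = c^2 * measure lborel (cbox a b)" by simp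
  finally show "(\<integral>p. (cmod (f p))^2 \<partial>lborel) \<le> c^2 * measure lborel (cbox a b)" .
qed

lemma L2_lower:
  fixes f :: fn2
  assumes f: "f \<in> L2" and b: "\<And>p. p \<in> cbox a b \<Longrightarrow> m \<le> cmod (f p)" and m: "0 \<le> m"
  shows "m^2 * measure lborel (cbox a b) \<le> (\<integral>p. (cmod (f p))^2 \<partial>lborel)"
proof -
  have ii: "integrable lborel (\<lambda>p. m^2 * indicator (cbox a b) p :: real)"
    by (intro integrable_mult_right) (use emeasure_lborel_cbox_finite[of a b] in \<open>simp add: integrable_indicator_iff\<close>)
  have i2: "integrable lborel (\<lambda>p. (cmod (f p))^2)" using f by (simp add: L2_def)
  have bd: "m^2 * indicator (cbox a b) p \<le> (cmod (f p))^2" for p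
    using b[of p] m by (auto simp: indicator_def intro: power_mono)
  have "m^2 * measure lborel (cbox a b) = (\<integral>p. m^2 * indicator (cbox a b) p \<partial>lborel)" by simp
  also have "\<dots> \<le> (\<integral>p. (cmod (f p))^2 \<partial>lborel)"
    by (intro integral_mono i2 ii bd)
  finally show ?thesis .
qed

definition params :: "real \<Rightarrow> real \<Rightarrow> real \<Rightarrow> real \<Rightarrow> real \<Rightarrow> real \<Rightarrow> bool" where
  "params w B nu k y0 z \<longleftrightarrow> nu > 0 \<and> nu^2 = w^2 + B^2 \<and> y0 * nu^2 = -(k*B) \<and> z * nu^2 = nu^3 + k^2 * w^2"

lemma Q_zero:
  assumes "params w B nu k y0 z"
  shows "-(nu^2 * (y - y0)^2 - nu) + (k + B*y)^2 + w^2 * y^2 - z = 0"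
proof -
  have h: "nu > 0" "nu^2 = w^2 + B^2" "y0 * nu^2 = -(k*B)" "z * nu^2 = nu^3 + k^2 * w^2"
    using assms by (auto simp: params_def)
  have "nu^2 * (-(nu^2 * (y - y0)^2 - nu) + (k + B*y)^2 + w^2 * y^2 - z) = 0"
    using h(2-4) by algebra
  then show ?thesis using h(1) by simp
qed

lemma RE_id:
  assumes "params w B nu k y0 z"
  shows "- gg2 nu y0 R y + ((k + B*y)^2 + w^2 * y^2 - z) * gg nu y0 R y
       = - 2 * G1 nu y0 y * sc1 y0 R y - Gs nu y0 y * sc2 y0 R y"
proof -
  have q: "-(nu^2 * (y - y0)^2 - nu) + (k + B*y)^2 + w^2 * y^2 - z = 0" by (rule Q_zero[OF assms])
  have "- gg2 nu y0 R y + ((k + B*y)^2 + w^2 * y^2 - z) * gg nu y0 R y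
     = sc y0 R y * Gs nu y0 y * (-(nu^2 * (y - y0)^2 - nu) + (k + B*y)^2 + w^2 * y^2 - z)
       - 2 * G1 nu y0 y * sc1 y0 R y - Gs nu y0 y * sc2 y0 R y"
    by (simp add: gg_def gg2_def G2_def algebra_simps)
  then show ?thesis using q by simp
qed

definition EE where
  "EE B w lam V k L nu y0 R x y =
     complex_of_real (sc (2*L) L x * (- 2 * G1 nu y0 y * sc1 y0 R y - Gs nu y0 y * sc2 y0 R y
         + lam * y^2 * V (x*y) * gg nu y0 R y) - sc2 (2*L) L x * gg nu y0 R y)
     + \<i> * complex_of_real (-2 * (k + B*y) * sc1 (2*L) L x * gg nu y0 R y)"

lemma E_id:
  assumes L: "L \<noteq> 0" and R: "R \<noteq> 0" and P: "params w B nu k y0 z"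
  shows "Hop B w lam V (uu k L nu y0 R) (x,y) - complex_of_real z * uu k L nu y0 R (x,y)
     = cis (k*x) * EE B w lam V k L nu y0 R x y"
proof -
  have uu': "uu k L nu y0 R (x,y) = aa k L x * complex_of_real (gg nu y0 R y)" by (simp add: uu_def)
  have a: "Hop B w lam V (uu k L nu y0 R) (x,y) - complex_of_real z * uu k L nu y0 R (x,y)
     = cis (k*x) * (complex_of_real (sc (2*L) L x * (- gg2 nu y0 R y + ((k + B*y)^2 + (w^2 * y^2 + lam * y^2 * V (x*y)) - z) * gg nu y0 R y)
          - sc2 (2*L) L x * gg nu y0 R y) + \<i> * complex_of_real (-2 * (k + B*y) * sc1 (2*L) L x * gg nu y0 R y))"
    unfolding Hop_uu[OF L R] uu' aa_def aa1_def aa2_def by (rule alg1)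
  have b: "sc (2*L) L x * (- gg2 nu y0 R y + ((k + B*y)^2 + (w^2 * y^2 + lam * y^2 * V (x*y)) - z) * gg nu y0 R y)
      = sc (2*L) L x * (- 2 * G1 nu y0 y * sc1 y0 R y - Gs nu y0 y * sc2 y0 R y
         + lam * y^2 * V (x*y) * gg nu y0 R y)"
  proof -
    have r: "- gg2 nu y0 R y + ((k + B*y)^2 + (w^2 * y^2 + lam * y^2 * V (x*y)) - z) * gg nu y0 R y
      = (- gg2 nu y0 R y + ((k + B*y)^2 + w^2 * y^2 - z) * gg nu y0 R y) + lam * y^2 * V (x*y) * gg nu y0 R y"
      by (simp add: algebra_simps)
    show ?thesis unfolding r RE_id[OF P] ..
  qed
  show ?thesis unfolding a b EE_def ..
qed


lemma nd_all_D:
  assumes "\<And>n. nd n f"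
  shows "((deriv ^^ n) f has_real_derivative (deriv ^^ Suc n) f x) (at x)"
proof -
  have "(deriv ^^ n) f differentiable (at x)" using assms Cinf_nd by blast
  then show ?thesis by (simp add: deriv_DERIV)
qed

lemma pair_vD:
  assumes ncf: "\<And>n. nd n cf" and nsf: "\<And>n. nd n sf"
  shows "((\<lambda>x. complex_of_real ((deriv ^^ n) cf x) + \<i> * complex_of_real ((deriv ^^ n) sf x)) has_vector_derivative
      complex_of_real ((deriv ^^ Suc n) cf x) + \<i> * complex_of_real ((deriv ^^ Suc n) sf x)) (at x)"
proof -
    have d1: "((deriv^^n) cf has_real_derivative (deriv^^Suc n) cf x) (at x)" by (rule nd_all_D[OF ncf])
    have d2: "((deriv^^n) sf has_real_derivative (deriv^^Suc n) sf x) (at x)" by (rule nd_all_D[OF nsf])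
    show ?thesis
      by (rule has_vector_derivative_add[OF has_vector_derivative_of_real[OF d1]
           has_vector_derivative_mult_right[OF has_vector_derivative_of_real[OF d2]]])
qed

lemma single_vD:
  assumes "\<And>n. nd n f"
  shows "((\<lambda>x. complex_of_real ((deriv ^^ n) f x)) has_vector_derivative complex_of_real ((deriv ^^ Suc n) f x)) (at x)"
  by (rule has_vector_derivative_of_real[OF nd_all_D[OF assms]])

lemma uu_smooth:
  shows "smooth2 (uu k L nu y0 R)"
proof -
  define cf where "cf = (\<lambda>x. cos (k*x) * sc (2*L) L x)"
  define sf where "sf = (\<lambda>x. sin (k*x) * sc (2*L) L x)"
  have kx: "nd n (\<lambda>x. k * x)" for n by (intro nd_mult nd_const nd_id)
  have ncf: "nd n cf" for n unfolding cf_def using nd_cos_sin[OF kx] by (intro nd_mult sc_nd) auto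
  have nsf: "nd n sf" for n unfolding sf_def using nd_cos_sin[OF kx] by (intro nd_mult sc_nd) auto
  have ngg: "nd n (gg nu y0 R)" for n by (rule gg_nd)
  have e: "uu k L nu y0 R = (\<lambda>(x,y). (complex_of_real ((deriv ^^ 0) cf x) + \<i> * complex_of_real ((deriv ^^ 0) sf x))
      * complex_of_real ((deriv ^^ 0) (gg nu y0 R) y))"
  proof
    fix p :: "real \<times> real"
    obtain x y where p: "p = (x,y)" by force
    show "uu k L nu y0 R p = (\<lambda>(x,y). (complex_of_real ((deriv ^^ 0) cf x) + \<i> * complex_of_real ((deriv ^^ 0) sf x))
      * complex_of_real ((deriv ^^ 0) (gg nu y0 R) y)) p"
      unfolding p by (simp add: uu_def aa_def cf_def sf_def cis_alt algebra_simps)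
  qed
  show ?thesis
    unfolding e
    apply (rule smooth2_prod[where A="\<lambda>n x. complex_of_real ((deriv ^^ n) cf x) + \<i> * complex_of_real ((deriv ^^ n) sf x)"
          and Bf="\<lambda>n y. complex_of_real ((deriv ^^ n) (gg nu y0 R) y)"])
    apply (rule pair_vD[OF ncf nsf])
    apply (rule single_vD[OF ngg])
    done
qed

lemma div_ge1: "(L::real) > 0 \<Longrightarrow> L \<le> \<bar>a\<bar> \<Longrightarrow> 1 \<le> \<bar>a / L\<bar>"
  by (simp add: abs_divide le_divide_eq)

lemma div_gt1: "(L::real) > 0 \<Longrightarrow> L < \<bar>a\<bar> \<Longrightarrow> 1 < \<bar>a / L\<bar>"
  by (simp add: abs_divide less_divide_eq)

lemma sc_zero: "L > 0 \<Longrightarrow> L \<le> \<bar>x - c\<bar> \<Longrightarrow> sc c L x = 0"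
  unfolding sc_def by (rule rho_zero[OF div_ge1])

lemma sc1_zero: "L > 0 \<Longrightarrow> L < \<bar>x - c\<bar> \<Longrightarrow> sc1 c L x = 0"
  unfolding sc1_def using rho1_zero[OF div_gt1] by simp

lemma sc2_zero: "L > 0 \<Longrightarrow> L < \<bar>x - c\<bar> \<Longrightarrow> sc2 c L x = 0"
  unfolding sc2_def using rho2_zero[OF div_gt1] by simp

lemma uu_test:
  assumes L: "L > 0" and R: "R > 0"
  shows "test_fn (uu k L nu y0 R)"
proof -
  have "{z. uu k L nu y0 R z \<noteq> 0} \<subseteq> cbox (L, y0 - R) (3*L, y0 + R)"
  proof
    fix z assume z0: "z \<in> {z. uu k L nu y0 R z \<noteq> 0}"
    obtain x y where z: "z = (x,y)" by force
    have "sc (2*L) L x \<noteq> 0" "sc y0 R y \<noteq> 0"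
      using z0 unfolding z by (auto simp: uu_def aa_def gg_def)
    then have "\<bar>x - 2*L\<bar> < L" "\<bar>y - y0\<bar> < R"
      using sc_zero[OF L, of x "2*L"] sc_zero[OF R, of y y0] by linarith+
    then have "L \<le> x" "x \<le> 3*L" "y0 - R \<le> y" "y \<le> y0 + R" by (simp_all add: abs_less_iff)
    then show "z \<in> cbox (L, y0 - R) (3*L, y0 + R)"
      unfolding z cbox_Pair_eq by simp
  qed
  then have "bounded {z. uu k L nu y0 R z \<noteq> 0}" by (rule bounded_subset[OF bounded_cbox])
  then show ?thesis using uu_smooth by (simp add: test_fn_def)
qed

lemma uu_cont: "L > 0 \<Longrightarrow> R > 0 \<Longrightarrow> continuous_on UNIV (uu k L nu y0 R)"
  using uu_smooth smooth2_base(1) by blast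

lemma aa_conts:
  assumes L: "L > 0"
  shows "isCont (aa k L) x" "isCont (aa1 k L) x" "isCont (aa2 k L) x"
proof -
  have Ln: "L \<noteq> 0" using L by simp
  show "isCont (aa k L) x" by (rule has_vector_derivative_continuous[OF aa_D[OF Ln]])
  show "isCont (aa1 k L) x" by (rule has_vector_derivative_continuous[OF aa1_D[OF Ln]])
  have r: "isCont (\<lambda>x. (x - 2*L)/L) x" using Ln by (intro continuous_intros) auto
  have c2: "isCont (sc2 (2*L) L) x"
  proof -
    have "isCont (\<lambda>x. rho2 ((x - 2*L)/L)) x" by (rule isCont_o2[OF r rho2_cont])
    then have "isCont (\<lambda>x. rho2 ((x - 2*L)/L) / L^2) x" using Ln by (intro isCont_divide continuous_const) simp_all
    then show ?thesis unfolding sc2_def[abs_def] .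
  qed
  have c0: "isCont (sc (2*L) L) x" by (rule DERIV_isCont[OF sc_D[OF Ln]])
  have c1: "isCont (sc1 (2*L) L) x" by (rule DERIV_isCont[OF sc1_D[OF Ln]])
  have cc: "isCont (\<lambda>x. cis (k*x)) x" by (rule has_vector_derivative_continuous[OF cis_D])
  have o0: "isCont (\<lambda>x. complex_of_real (sc (2*L) L x)) x" by (rule continuous_of_real[OF c0])
  have o1: "isCont (\<lambda>x. complex_of_real (sc1 (2*L) L x)) x" by (rule continuous_of_real[OF c1])
  have o2: "isCont (\<lambda>x. complex_of_real (sc2 (2*L) L x)) x" by (rule continuous_of_real[OF c2])
  show "isCont (aa2 k L) x" unfolding aa2_def[abs_def]
    by (intro isCont_mult isCont_add isCont_diff cc o0 o1 o2 continuous_const)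
qed

lemma gg_conts:
  assumes R: "R > 0"
  shows "isCont (gg nu y0 R) y" "isCont (gg2 nu y0 R) y"
proof -
  have Rn: "R \<noteq> 0" using R by simp
  show "isCont (gg nu y0 R) y" by (rule DERIV_isCont[OF gg_D[OF Rn]])
  have r: "isCont (\<lambda>x. (x - y0)/R) y" using Rn by (intro continuous_intros) auto
  have c2: "isCont (sc2 y0 R) y"
  proof -
    have "isCont (\<lambda>x. rho2 ((x - y0)/R)) y" by (rule isCont_o2[OF r rho2_cont])
    then have "isCont (\<lambda>x. rho2 ((x - y0)/R) / R^2) y" using Rn by (intro isCont_divide continuous_const) simp_all
    then show ?thesis unfolding sc2_def[abs_def] .
  qed
  have c0: "isCont (sc y0 R) y" by (rule DERIV_isCont[OF sc_D[OF Rn]])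
  have c1: "isCont (sc1 y0 R) y" by (rule DERIV_isCont[OF sc1_D[OF Rn]])
  have g0: "isCont (Gs nu y0) y" by (rule DERIV_isCont[OF Gs_D])
  have g1: "isCont (G1 nu y0) y" by (rule DERIV_isCont[OF G1_D])
  have g2: "isCont (G2 nu y0) y" unfolding G2_def[abs_def] using g0 by (intro continuous_intros)
  show "isCont (gg2 nu y0 R) y" unfolding gg2_def[abs_def]
    by (intro isCont_mult isCont_add continuous_const c0 c1 c2 g0 g1 g2)
qed

lemma Hop_uu_cont:
  assumes L: "L > 0" and R: "R > 0" and V: "\<And>s. isCont V s"
  shows "continuous_on UNIV (Hop B w lam V (uu k L nu y0 R))"
proof -
  have Ln: "L \<noteq> 0" and Rn: "R \<noteq> 0" using L R by auto
  have e: "Hop B w lam V (uu k L nu y0 R) = (\<lambda>p.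
    \<i> * (\<i> * (aa2 k L (fst p) * gg nu y0 R (snd p)) - complex_of_real (B * snd p) * (aa1 k L (fst p) * gg nu y0 R (snd p)))
    - complex_of_real (B * snd p) * (\<i> * (aa1 k L (fst p) * gg nu y0 R (snd p)) - complex_of_real (B * snd p) * (aa k L (fst p) * gg nu y0 R (snd p)))
    - aa k L (fst p) * gg2 nu y0 R (snd p)
    + complex_of_real (w^2 * (snd p)^2 + lam * (snd p)^2 * V (fst p * snd p)) * (aa k L (fst p) * gg nu y0 R (snd p)))"
  proof
    fix p :: "real \<times> real"
    obtain x y where p: "p = (x,y)" by force
    show "Hop B w lam V (uu k L nu y0 R) p = (\<lambda>p.
    \<i> * (\<i> * (aa2 k L (fst p) * gg nu y0 R (snd p)) - complex_of_real (B * snd p) * (aa1 k L (fst p) * gg nu y0 R (snd p)))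
    - complex_of_real (B * snd p) * (\<i> * (aa1 k L (fst p) * gg nu y0 R (snd p)) - complex_of_real (B * snd p) * (aa k L (fst p) * gg nu y0 R (snd p)))
    - aa k L (fst p) * gg2 nu y0 R (snd p)
    + complex_of_real (w^2 * (snd p)^2 + lam * (snd p)^2 * V (fst p * snd p)) * (aa k L (fst p) * gg nu y0 R (snd p))) p"
      unfolding p Hop_uu[OF Ln Rn] by simp
  qed
  have A0: "isCont (\<lambda>p. aa k L (fst p)) p" for p by (rule isCont_o2[OF isCont_fst[OF continuous_ident] aa_conts(1)[OF L]])
  have A1: "isCont (\<lambda>p. aa1 k L (fst p)) p" for p by (rule isCont_o2[OF isCont_fst[OF continuous_ident] aa_conts(2)[OF L]])
  have A2: "isCont (\<lambda>p. aa2 k L (fst p)) p" for p by (rule isCont_o2[OF isCont_fst[OF continuous_ident] aa_conts(3)[OF L]])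
  have G0: "isCont (\<lambda>p. complex_of_real (gg nu y0 R (snd p))) p" for p
    by (rule continuous_of_real[OF isCont_o2[OF isCont_snd[OF continuous_ident] gg_conts(1)[OF R]]])
  have G2: "isCont (\<lambda>p. complex_of_real (gg2 nu y0 R (snd p))) p" for p
    by (rule continuous_of_real[OF isCont_o2[OF isCont_snd[OF continuous_ident] gg_conts(2)[OF R]]])
  have VV: "isCont (\<lambda>p::real\<times>real. V (fst p * snd p)) p" for p
    by (rule isCont_o2[where f="\<lambda>p. fst p * snd p", OF _ V]) (intro continuous_intros)
  have Y: "isCont (\<lambda>p::real\<times>real. snd p) p" for p by (rule isCont_snd[OF continuous_ident])
  have "isCont (\<lambda>p. \<i> * (\<i> * (aa2 k L (fst p) * gg nu y0 R (snd p)) - complex_of_real (B * snd p) * (aa1 k L (fst p) * gg nu y0 R (snd p)))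
    - complex_of_real (B * snd p) * (\<i> * (aa1 k L (fst p) * gg nu y0 R (snd p)) - complex_of_real (B * snd p) * (aa k L (fst p) * gg nu y0 R (snd p)))
    - aa k L (fst p) * gg2 nu y0 R (snd p)
    + complex_of_real (w^2 * (snd p)^2 + lam * (snd p)^2 * V (fst p * snd p)) * (aa k L (fst p) * gg nu y0 R (snd p))) p" for p
    by (intro isCont_mult isCont_add isCont_diff continuous_const A0 A1 A2 G0 G2 continuous_of_real VV Y isCont_power)
  then show ?thesis unfolding e by (simp add: continuous_at_imp_continuous_on)
qed


lemma texp:
  fixes a t :: real
  assumes a: "a > 0"
  shows "\<bar>t\<bar> * exp (-(a * t^2)) \<le> 1 + 1/a"
proof -
  have e1: "1 + a * t^2 \<le> exp (a * t^2)" by (rule exp_ge_add_one_self)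
  have "\<bar>t\<bar> \<le> (1 + 1/a) * (1 + a * t^2)"
  proof (cases "\<bar>t\<bar> \<le> 1")
    case True
    have "1 \<le> (1 + 1/a) * (1 + a * t^2)"
      using a by (intro order_trans[OF _ mult_mono[of 1 "1 + 1/a" 1 "1 + a*t^2"]]) auto
    then show ?thesis using True by linarith
  next
    case False
    have "\<bar>t\<bar> * 1 \<le> \<bar>t\<bar> * \<bar>t\<bar>" using False by (intro mult_left_mono) auto
    then have "\<bar>t\<bar> \<le> t^2" by (simp add: power2_eq_square)
    also have "\<dots> = (1/a) * (a * t^2)" using a by simp
    also have "\<dots> \<le> (1 + 1/a) * (1 + a * t^2)"
      using a by (intro mult_mono) auto
    finally show ?thesis .
  qed
  also have "\<dots> \<le> (1 + 1/a) * exp (a * t^2)"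
    using a e1 by (intro mult_left_mono) auto
  finally have "\<bar>t\<bar> \<le> (1 + 1/a) * exp (a * t^2)" .
  then have "\<bar>t\<bar> * exp (-(a * t^2)) \<le> (1 + 1/a) * exp (a * t^2) * exp (-(a * t^2))"
    by (intro mult_right_mono) auto
  also have "\<dots> = 1 + 1/a" by (simp add: exp_minus field_simps)
  finally show ?thesis .
qed

lemma Gs_pos: "0 < Gs nu y0 y" and Gs_le1: "nu \<ge> 0 \<Longrightarrow> Gs nu y0 y \<le> 1"
  by (auto simp: Gs_def)

lemma Gs_t: "nu > 0 \<Longrightarrow> \<bar>y - y0\<bar> * Gs nu y0 y \<le> 1 + 2/nu"
  using texp[of "nu/2" "y - y0"] by (simp add: Gs_def)

lemma G1_bound: "nu > 0 \<Longrightarrow> \<bar>G1 nu y0 y\<bar> \<le> nu + 2"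
proof -
  assume nu: "nu > 0"
  have "\<bar>G1 nu y0 y\<bar> = nu * (\<bar>y - y0\<bar> * Gs nu y0 y)"
    using nu Gs_pos[of nu y0 y] by (simp add: G1_def abs_mult)
  also have "\<dots> \<le> nu * (1 + 2/nu)" using Gs_t[OF nu] nu by (intro mult_left_mono) auto
  also have "\<dots> = nu + 2" using nu by (simp add: field_simps)
  finally show ?thesis .
qed

lemma Gs_low: "nu \<ge> 0 \<Longrightarrow> \<bar>y - y0\<bar> \<le> 1/2 \<Longrightarrow> exp (-(nu/8)) \<le> Gs nu y0 y"
proof -
  assume nu: "nu \<ge> 0" and t: "\<bar>y - y0\<bar> \<le> 1/2"
  have "(y - y0)^2 \<le> (1/2)^2" using t by (metis abs_ge_zero power2_abs power_mono)
  then have "(nu/2) * (y - y0)^2 \<le> (nu/2) * (1/2)^2" using nu by (intro mult_left_mono) auto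
  then show ?thesis unfolding Gs_def by (simp add: power2_eq_square)
qed

lemma sc_range: "0 \<le> sc c L x" "sc c L x \<le> 1"
  by (simp_all add: sc_def rho_range)

lemma sc1_bound: "(\<forall>t. \<bar>rho1 t\<bar> \<le> K1) \<Longrightarrow> L > 0 \<Longrightarrow> \<bar>sc1 c L x\<bar> \<le> K1 / L"
  by (simp add: sc1_def abs_divide divide_right_mono)

lemma sc2_bound: "(\<forall>t. \<bar>rho2 t\<bar> \<le> K2) \<Longrightarrow> L > 0 \<Longrightarrow> \<bar>sc2 c L x\<bar> \<le> K2 / L^2"
  by (simp add: sc2_def abs_divide divide_right_mono)

lemma gg_range: "nu \<ge> 0 \<Longrightarrow> 0 \<le> gg nu y0 R y \<and> gg nu y0 R y \<le> 1"
  using Gs_pos[of nu y0 y] Gs_le1[of nu y0 y] sc_range[of y0 R y]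
  by (auto simp: gg_def intro: mult_le_one)

lemma kBy_bound:
  assumes nu: "nu > 0" and B: "B \<ge> 0"
  shows "\<bar>(k + B*y) * gg nu y0 R y\<bar> \<le> \<bar>k + B*y0\<bar> + B * (1 + 2/nu)"
proof -
  have g: "0 \<le> gg nu y0 R y" "gg nu y0 R y \<le> 1" using gg_range nu by auto
  have "\<bar>(k + B*y) * gg nu y0 R y\<bar> \<le> \<bar>k + B*y0\<bar> * gg nu y0 R y + B * (\<bar>y - y0\<bar> * gg nu y0 R y)"
  proof -
    have "\<bar>k + B*y\<bar> \<le> \<bar>k + B*y0\<bar> + B * \<bar>y - y0\<bar>"
    proof -
      have "k + B*y = (k + B*y0) + B * (y - y0)" by (simp add: algebra_simps)
      then show ?thesis using B by (metis abs_mult abs_of_nonneg abs_triangle_ineq)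
    qed
    then have "\<bar>k + B*y\<bar> * gg nu y0 R y \<le> (\<bar>k + B*y0\<bar> + B * \<bar>y - y0\<bar>) * gg nu y0 R y"
      using g by (intro mult_right_mono) auto
    moreover have "\<bar>(k + B*y) * gg nu y0 R y\<bar> = \<bar>k + B*y\<bar> * gg nu y0 R y" using g by (simp add: abs_mult)
    ultimately show ?thesis by (simp add: algebra_simps)
  qed
  also have "\<dots> \<le> \<bar>k + B*y0\<bar> * 1 + B * (1 + 2/nu)"
  proof (intro add_mono mult_left_mono)
    show "gg nu y0 R y \<le> 1" using g by simp
    have "\<bar>y - y0\<bar> * gg nu y0 R y \<le> \<bar>y - y0\<bar> * Gs nu y0 y"
    proof -
      have "Gs nu y0 y * sc y0 R y \<le> Gs nu y0 y"
        using sc_range[of y0 R y] Gs_pos[of nu y0 y] by (intro mult_left_le) auto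
      then show ?thesis unfolding gg_def by (intro mult_left_mono) auto
    qed
    then show "\<bar>y - y0\<bar> * gg nu y0 R y \<le> 1 + 2/nu" using Gs_t[OF nu, of y y0] by linarith
  qed (use B in auto)
  finally show ?thesis by simp
qed

lemma Vterm_bound:
  assumes L: "L > 0" and Vr: "\<forall>s. 0 \<le> V s \<and> V s \<le> Vm" and Vs: "\<forall>s. V s \<noteq> 0 \<longrightarrow> \<bar>s\<bar> \<le> s0"
  shows "\<bar>lam * y^2 * V (x*y)\<bar> * sc (2*L) L x \<le> \<bar>lam\<bar> * s0^2 * Vm / L^2"
proof (cases "sc (2*L) L x = 0 \<or> V (x*y) = 0")
  case True
  have "0 \<le> Vm" using Vr by (meson order_trans)
  then show ?thesis using True L by auto
next
  case False
  then have sc0: "sc (2*L) L x \<noteq> 0" and v0: "V (x*y) \<noteq> 0" by auto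
  have "\<bar>x - 2*L\<bar> < L" using sc0 sc_zero[OF L, of x "2*L"] by linarith
  then have xL: "L < x" by (simp add: abs_less_iff)
  have xy: "\<bar>x*y\<bar> \<le> s0" using Vs v0 by blast
  have "L * \<bar>y\<bar> \<le> x * \<bar>y\<bar>" using xL by (intro mult_right_mono) auto
  also have "\<dots> = \<bar>x*y\<bar>" using xL L by (simp add: abs_mult)
  finally have "L * \<bar>y\<bar> \<le> s0" using xy by linarith
  then have yb: "\<bar>y\<bar> \<le> s0 / L" using L by (simp add: field_simps)
  have s0: "0 \<le> s0" using xy by linarith
  have "y^2 \<le> (s0/L)^2" using yb by (metis abs_ge_zero power2_abs power_mono)
  then have y2: "y^2 \<le> s0^2 / L^2" by (simp add: power_divide)
  have "\<bar>lam * y^2 * V (x*y)\<bar> * sc (2*L) L x \<le> \<bar>lam * y^2 * V (x*y)\<bar> * 1"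
    using sc_range[of "2*L" L x] by (intro mult_left_mono) auto
  also have "\<dots> = \<bar>lam\<bar> * y^2 * V (x*y)" using Vr by (simp add: abs_mult)
  also have "\<dots> \<le> \<bar>lam\<bar> * (s0^2 / L^2) * Vm"
    using Vr y2 by (intro mult_mono) auto
  finally show ?thesis by simp
qed


lemma cmod_ri: "cmod (complex_of_real a + \<i> * complex_of_real b) \<le> \<bar>a\<bar> + \<bar>b\<bar>"
proof -
  have "cmod (complex_of_real a + \<i> * complex_of_real b) \<le> cmod (complex_of_real a) + cmod (\<i> * complex_of_real b)"
    by (rule norm_triangle_ineq)
  then show ?thesis by (simp add: norm_mult)
qed

lemma abs4: "\<bar>- a - b + c - d\<bar> \<le> \<bar>a\<bar> + \<bar>b\<bar> + \<bar>c\<bar> + \<bar>d::real\<bar>"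
  by arith

lemma EE_bound:
  assumes nu: "nu > 0" and B: "B \<ge> 0" and L: "L > 0" and R: "R > 0"
    and K1: "\<forall>t. \<bar>rho1 t\<bar> \<le> K1" and K2: "\<forall>t. \<bar>rho2 t\<bar> \<le> K2"
    and Vr: "\<forall>s. 0 \<le> V s \<and> V s \<le> Vm" and Vs: "\<forall>s. V s \<noteq> 0 \<longrightarrow> \<bar>s\<bar> \<le> s0"
  shows "cmod (EE B w lam V k L nu y0 R x y) \<le> 2*(nu+2)*(K1/R) + K2/R^2 + \<bar>lam\<bar>* s0^2*Vm/L^2 + K2/L^2
           + 2*(\<bar>k + B*y0\<bar> + B * (1 + 2/nu))*(K1/L)"
proof -
  define c where "c = sc (2*L) L x"
  define c1 where "c1 = sc1 (2*L) L x"
  define c2 where "c2 = sc2 (2*L) L x"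
  define s1 where "s1 = sc1 y0 R y"
  define s2 where "s2 = sc2 y0 R y"
  define g where "g = gg nu y0 R y"
  define G where "G = Gs nu y0 y"
  define H where "H = G1 nu y0 y"
  define P where "P = lam * y^2 * V (x*y)"
  define M where "M = \<bar>k + B*y0\<bar> + B * (1 + 2/nu)"
  have c: "0 \<le> c" "c \<le> 1" unfolding c_def by (rule sc_range)+
  have g: "0 \<le> g" "g \<le> 1" unfolding g_def using gg_range nu by auto
  have G: "0 \<le> G" "G \<le> 1" unfolding G_def using Gs_pos Gs_le1 nu by (auto intro: less_imp_le)
  have H: "\<bar>H\<bar> \<le> nu + 2" unfolding H_def by (rule G1_bound[OF nu])
  have bs1: "\<bar>s1\<bar> \<le> K1/R" unfolding s1_def by (rule sc1_bound[OF K1 R])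
  have bs2: "\<bar>s2\<bar> \<le> K2/R^2" unfolding s2_def by (rule sc2_bound[OF K2 R])
  have bc1: "\<bar>c1\<bar> \<le> K1/L" unfolding c1_def by (rule sc1_bound[OF K1 L])
  have bc2: "\<bar>c2\<bar> \<le> K2/L^2" unfolding c2_def by (rule sc2_bound[OF K2 L])
  have bP: "\<bar>P\<bar> * c \<le> \<bar>lam\<bar>* s0^2*Vm/L^2" unfolding P_def c_def by (rule Vterm_bound[OF L Vr Vs])
  have bM: "\<bar>(k + B*y) * g\<bar> \<le> M" unfolding g_def M_def by (rule kBy_bound[OF nu B])
  have E: "EE B w lam V k L nu y0 R x y = complex_of_real (c * (- 2 * H * s1 - G * s2 + P * g) - c2 * g)
      + \<i> * complex_of_real (-2 * (k + B*y) * c1 * g)"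
    unfolding EE_def c_def c1_def c2_def s1_def s2_def g_def G_def H_def P_def ..
  have t1: "\<bar>c * (2 * H * s1)\<bar> \<le> 2*((nu+2)*(K1/R))"
  proof -
    have hs: "\<bar>H\<bar> * \<bar>s1\<bar> \<le> (nu+2) * (K1/R)" using H bs1 nu by (intro mult_mono) auto
    have hc: "c * (\<bar>H\<bar> * \<bar>s1\<bar>) \<le> 1 * ((nu+2) * (K1/R))" by (rule mult_mono[OF c(2) hs]) simp_all
    have eq: "\<bar>c * (2 * H * s1)\<bar> = 2 * (c * (\<bar>H\<bar> * \<bar>s1\<bar>))" using c by (simp add: abs_mult mult_ac)
    show ?thesis unfolding eq using hc by linarith
  qed
  have t2: "\<bar>c * (G * s2)\<bar> \<le> K2/R^2"
  proof -
    have hs: "G * \<bar>s2\<bar> \<le> 1 * (K2/R^2)" using G bs2 by (intro mult_mono) auto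
    have "c * (G * \<bar>s2\<bar>) \<le> 1 * (1 * (K2/R^2))" by (rule mult_mono[OF c(2) hs]) (use G in simp_all)
    then show ?thesis using c G by (simp add: abs_mult)
  qed
  have t3: "\<bar>c * (P * g)\<bar> \<le> \<bar>lam\<bar>* s0^2*Vm/L^2"
  proof -
    have "\<bar>P\<bar> * c * g \<le> \<bar>P\<bar> * c * 1" using c g by (intro mult_left_mono) auto
    then show ?thesis using bP c g by (simp add: abs_mult mult_ac)
  qed
  have t4: "\<bar>c2 * g\<bar> \<le> K2/L^2"
  proof -
    have "\<bar>c2\<bar> * g \<le> (K2/L^2) * 1" using bc2 g by (intro mult_mono) auto
    then show ?thesis using g by (simp add: abs_mult)
  qed
  have t5: "\<bar>-2 * (k + B*y) * c1 * g\<bar> \<le> 2 * M * (K1/L)"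
  proof -
    have "\<bar>(k + B*y) * g\<bar> * \<bar>c1\<bar> \<le> M * (K1/L)"
      using bM bc1 by (intro mult_mono) (auto intro: order_trans[OF abs_ge_zero bM])
    moreover have "\<bar>-2 * (k + B*y) * c1 * g\<bar> = 2 * (\<bar>(k + B*y) * g\<bar> * \<bar>c1\<bar>)"
      unfolding abs_mult by (simp add: mult_ac)
    ultimately show ?thesis by simp
  qed
  have re: "\<bar>c * (- 2 * H * s1 - G * s2 + P * g) - c2 * g\<bar>
       \<le> \<bar>c * (2 * H * s1)\<bar> + \<bar>c * (G * s2)\<bar> + \<bar>c * (P * g)\<bar> + \<bar>c2 * g\<bar>"
  proof -
    have eq: "c * (- 2 * H * s1 - G * s2 + P * g) - c2 * g = - (c * (2 * H * s1)) - c * (G * s2) + c * (P * g) - c2 * g"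
      by (simp add: algebra_simps)
    show ?thesis unfolding eq by (rule abs4)
  qed
  have "cmod (EE B w lam V k L nu y0 R x y) \<le> \<bar>c * (- 2 * H * s1 - G * s2 + P * g) - c2 * g\<bar> + \<bar>-2 * (k + B*y) * c1 * g\<bar>"
    unfolding E by (rule cmod_ri)
  also have "\<dots> \<le> 2*(nu+2)*(K1/R) + K2/R^2 + \<bar>lam\<bar>* s0^2*Vm/L^2 + K2/L^2 + 2 * M * (K1/L)"
  proof -
    have "2*((nu+2)*(K1/R)) = 2*(nu+2)*(K1/R)" by (rule mult.assoc[symmetric])
    then show ?thesis using re t1 t2 t3 t4 t5 by linarith
  qed
  finally show ?thesis by (simp only: M_def)
qed
lemma EE_zero:
  assumes L: "L > 0" and R: "R > 0" and out: "(x,y) \<notin> cbox (L, y0 - R) (3*L, y0 + R)"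
  shows "EE B w lam V k L nu y0 R x y = 0"
proof -
  have "\<not> (L \<le> x \<and> x \<le> 3*L) \<or> \<not> (y0 - R \<le> y \<and> y \<le> y0 + R)"
    using out by (auto simp: cbox_Pair_eq)
  then show ?thesis
  proof
    assume "\<not> (L \<le> x \<and> x \<le> 3*L)"
    then have a: "L < \<bar>x - 2*L\<bar>" by (auto simp: abs_if)
    have "sc (2*L) L x = 0" "sc1 (2*L) L x = 0" "sc2 (2*L) L x = 0"
      using sc_zero[OF L, of x "2*L"] sc1_zero[OF L a] sc2_zero[OF L a] a by auto
    then show ?thesis by (simp add: EE_def)
  next
    assume "\<not> (y0 - R \<le> y \<and> y \<le> y0 + R)"
    then have a: "R < \<bar>y - y0\<bar>" by (auto simp: abs_if)
    have "sc y0 R y = 0" "sc1 y0 R y = 0" "sc2 y0 R y = 0"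
      using sc_zero[OF R, of y y0] sc1_zero[OF R a] sc2_zero[OF R a] a by auto
    then show ?thesis by (simp add: EE_def gg_def)
  qed
qed

lemma uu_zero:
  assumes L: "L > 0" and R: "R > 0" and out: "(x,y) \<notin> cbox (L, y0 - R) (3*L, y0 + R)"
  shows "uu k L nu y0 R (x,y) = 0"
proof -
  have "\<not> (L \<le> x \<and> x \<le> 3*L) \<or> \<not> (y0 - R \<le> y \<and> y \<le> y0 + R)"
    using out by (auto simp: cbox_Pair_eq)
  then show ?thesis
  proof
    assume "\<not> (L \<le> x \<and> x \<le> 3*L)"
    then have a: "L < \<bar>x - 2*L\<bar>" by (auto simp: abs_if)
    then have "sc (2*L) L x = 0" using sc_zero[OF L, of x "2*L"] by auto
    then show ?thesis by (simp add: uu_def aa_def)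
  next
    assume "\<not> (y0 - R \<le> y \<and> y \<le> y0 + R)"
    then have a: "R < \<bar>y - y0\<bar>" by (auto simp: abs_if)
    then have "sc y0 R y = 0" using sc_zero[OF R, of y y0] by auto
    then show ?thesis by (simp add: uu_def gg_def)
  qed
qed

lemma uu_norm: "nu \<ge> 0 \<Longrightarrow> cmod (uu k L nu y0 R (x,y)) = sc (2*L) L x * gg nu y0 R y"
  using sc_range[of "2*L" L x] gg_range[of nu y0 R y]
  by (simp add: uu_def aa_def norm_mult)

lemma uu_le1: "nu \<ge> 0 \<Longrightarrow> cmod (uu k L nu y0 R (x,y)) \<le> 1"
  unfolding uu_norm using sc_range[of "2*L" L x] gg_range[of nu y0 R y]
  by (auto intro: mult_le_one)

lemma uu_low:
  assumes nu: "nu \<ge> 0" and L: "L > 0" and R: "R \<ge> 1"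
    and p: "(x,y) \<in> cbox (3*L/2, y0 - 1/2) (5*L/2, y0 + 1/2)"
  shows "exp (-4) * exp (-(nu/8)) * exp (-4) \<le> cmod (uu k L nu y0 R (x,y))"
proof -
  have q: "3*L/2 \<le> x" "x \<le> 5*L/2" "y0 - 1/2 \<le> y" "y \<le> y0 + 1/2" using p by (simp_all add: cbox_Pair_eq)
  have x: "\<bar>x - 2*L\<bar> \<le> L/2" unfolding abs_le_iff using q by linarith
  have y: "\<bar>y - y0\<bar> \<le> 1/2" unfolding abs_le_iff using q by linarith
  have a: "exp (-4) \<le> sc (2*L) L x" unfolding sc_def
    using x L by (intro rho_low) (simp add: abs_divide divide_le_eq)
  have b: "exp (-4) \<le> sc y0 R y" unfolding sc_def
    using y R by (intro rho_low) (simp add: abs_divide divide_le_eq)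
  have c: "exp (-(nu/8)) \<le> Gs nu y0 y" by (rule Gs_low[OF nu y])
  have "exp (-4) * exp (-(nu/8)) * exp (-4) \<le> sc (2*L) L x * Gs nu y0 y * sc y0 R y"
    using a b c sc_range[of "2*L" L x] Gs_pos[of nu y0 y] by (intro mult_mono) auto
  then show ?thesis unfolding uu_norm[OF nu] gg_def by (simp add: mult.assoc)
qed


lemma weyl:
  assumes P: "params w B nu k y0 z" and B: "B \<ge> 0"
    and K1: "\<forall>t. \<bar>rho1 t\<bar> \<le> K1" and K2: "\<forall>t. \<bar>rho2 t\<bar> \<le> K2"
    and Vr: "\<forall>s. 0 \<le> V s \<and> V s \<le> Vm" and Vs: "\<forall>s. V s \<noteq> 0 \<longrightarrow> \<bar>s\<bar> \<le> s0" and Vc: "\<And>s. isCont V s"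
    and e: "e > 0"
  shows "\<exists>u. test_fn u \<and> u \<in> L2 \<and> Hop B w lam V u \<in> L2 \<and> L2norm u > 0 \<and>
     L2norm (\<lambda>p. Hop B w lam V u p - complex_of_real z * u p) \<le> e * L2norm u"
proof -
  have nu: "nu > 0" using P by (simp add: params_def)
  have K1p: "0 \<le> K1" using K1 by (meson abs_ge_zero order_trans)
  have K2p: "0 \<le> K2" using K2 by (meson abs_ge_zero order_trans)
  have Vmp: "0 \<le> Vm" using Vr by (meson order_trans)
  define M where "M = \<bar>k + B*y0\<bar> + B * (1 + 2/nu)"
  have Mp: "0 \<le> M" unfolding M_def using B nu by simp
  define D where "D = 2*(nu+2)*K1 + K2 + \<bar>lam\<bar> * s0^2 * Vm + K2 + 2*M*K1"
  have Dp: "0 \<le> D" unfolding D_def using nu K1p K2p Vmp Mp by simp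
  define m where "m = exp (-4) * exp (-(nu/8)) * exp (-4::real)"
  have mp: "0 < m" unfolding m_def by simp
  define R where "R = 1 + 4 * D^2 / (e^2 * m^2)"
  have R1: "1 \<le> R" unfolding R_def using e mp by simp
  have R0: "0 < R" using R1 by simp
  define L where "L = R^2"
  have L1: "1 \<le> L" unfolding L_def using R1 by (simp add: one_le_power)
  have L0: "0 < L" using L1 by simp
  define \<delta> where "\<delta> = 2*(nu+2)*(K1/R) + K2/R^2 + \<bar>lam\<bar> * s0^2 * Vm/L^2 + K2/L^2 + 2*M*(K1/L)"
  have \<delta>p: "0 \<le> \<delta>" unfolding \<delta>_def using nu K1p K2p Vmp Mp R0 L0 by simp
  have i1: "1/R^2 \<le> 1/R" using R1 by (simp add: power2_eq_square field_simps)
  have i3: "1/L \<le> 1/R" unfolding L_def by (rule i1)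
  have i2: "1/L^2 \<le> 1/R"
  proof -
    have "1/L^2 \<le> 1/L" using L1 by (simp add: power2_eq_square field_simps)
    then show ?thesis using i3 by linarith
  qed
  have \<delta>D: "\<delta> \<le> D / R"
  proof -
    have "\<delta> = (2*(nu+2)*K1) * (1/R) + K2 * (1/R^2) + (\<bar>lam\<bar> * s0^2 * Vm) * (1/L^2) + K2 * (1/L^2) + (2*M*K1) * (1/L)"
      unfolding \<delta>_def by simp
    also have "\<dots> \<le> (2*(nu+2)*K1) * (1/R) + K2 * (1/R) + (\<bar>lam\<bar> * s0^2 * Vm) * (1/R) + K2 * (1/R) + (2*M*K1) * (1/R)"
      using i1 i2 i3 nu K1p K2p Vmp Mp
      by (intro add_mono mult_left_mono order_refl) auto
    also have "\<dots> = D / R" unfolding D_def using R0 by (simp add: field_simps)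
    finally show ?thesis .
  qed
  have key: "\<delta>^2 * (4*R) \<le> e^2 * m^2"
  proof -
    have "\<delta>^2 \<le> (D/R)^2" using \<delta>p \<delta>D by (intro power_mono) auto
    then have "\<delta>^2 * (4*R) \<le> (D/R)^2 * (4*R)" using R0 by (intro mult_right_mono) auto
    also have "\<dots> = 4 * D^2 / R" using R0 by (simp add: power2_eq_square field_simps)
    also have "\<dots> \<le> e^2 * m^2"
    proof -
      have "R * (e^2 * m^2) = e^2 * m^2 + 4 * D^2" unfolding R_def using e mp by (simp add: field_simps)
      then have "4 * D^2 \<le> R * (e^2 * m^2)" using e mp by simp
      then show ?thesis using R0 by (simp add: divide_le_eq mult.commute)
    qed
    finally show ?thesis .
  qed
  define u where "u = uu k L nu y0 R"
  define Q where "Q = cbox (L, y0 - R) (3*L, y0 + R)"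
  define Q' where "Q' = cbox (3*L/2, y0 - 1/2) (5*L/2, y0 + 1/2)"
  have Ln: "L \<noteq> 0" and Rn: "R \<noteq> 0" using L0 R0 by auto
  have hE: "cmod (Hop B w lam V u p - complex_of_real z * u p) \<le> \<delta> * indicator Q p" for p
  proof -
    obtain x y where p: "p = (x,y)" by force
    have eq: "cmod (Hop B w lam V u p - complex_of_real z * u p) = cmod (EE B w lam V k L nu y0 R x y)"
      unfolding p u_def E_id[OF Ln Rn P] by (simp add: norm_mult)
    show ?thesis
    proof (cases "p \<in> Q")
      case True
      then show ?thesis unfolding eq using EE_bound[OF nu B L0 R0 K1 K2 Vr Vs, of w lam k y0 x y]
        by (simp add: \<delta>_def M_def)
    next
      case False
      then show ?thesis unfolding eq using EE_zero[OF L0 R0, of x y y0] by (simp add: p Q_def)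
    qed
  qed
  have hu: "cmod (u p) \<le> 1 * indicator Q p" for p
  proof -
    obtain x y where p: "p = (x,y)" by force
    show ?thesis
      using uu_le1[of nu k L y0 R x y] uu_zero[OF L0 R0, of x y y0 k nu] nu
      unfolding p u_def Q_def by (cases "(x,y) \<in> cbox (L, y0 - R) (3 * L, y0 + R)") auto
  qed
  have hH: "cmod (Hop B w lam V u p) \<le> (\<delta> + cmod (complex_of_real z)) * indicator Q p" for p
  proof -
    have "cmod (Hop B w lam V u p) \<le> cmod (Hop B w lam V u p - complex_of_real z * u p) + cmod (complex_of_real z * u p)"
      using norm_triangle_sub[of "Hop B w lam V u p" "complex_of_real z * u p"] by linarith
    also have "\<dots> \<le> \<delta> * indicator Q p + cmod (complex_of_real z) * (1 * indicator Q p)"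
      using hE[of p] hu[of p] by (intro add_mono) (auto simp: norm_mult intro: mult_left_mono)
    finally show ?thesis by (simp add: algebra_simps)
  qed
  have um: "u \<in> borel_measurable lborel"
    unfolding u_def using uu_cont[OF L0 R0] by (simp add: borel_measurable_continuous_onI)
  have Hm: "Hop B w lam V u \<in> borel_measurable lborel"
    unfolding u_def using Hop_uu_cont[OF L0 R0 Vc] by (simp add: borel_measurable_continuous_onI)
  have Em: "(\<lambda>p. Hop B w lam V u p - complex_of_real z * u p) \<in> borel_measurable lborel"
    using um Hm by measurable
  have uL2: "u \<in> L2" unfolding Q_def by (rule L2_of_bound(1)[OF um hu[unfolded Q_def]])
  have HL2: "Hop B w lam V u \<in> L2" by (rule L2_of_bound(1)[OF Hm hH[unfolded Q_def]])
  have Eint: "(\<integral>p. (cmod (Hop B w lam V u p - complex_of_real z * u p))^2 \<partial>lborel) \<le> \<delta>^2 * measure lborel Q"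
    unfolding Q_def by (rule L2_of_bound(2)[OF Em hE[unfolded Q_def]])
  have mQ: "measure lborel Q = (2*L) * (2*R)"
    unfolding Q_def using L0 R0 by (subst measure_box2) auto
  have mQ': "measure lborel Q' = L * 1"
    unfolding Q'_def using L0 by (subst measure_box2) auto
  have uint: "m^2 * measure lborel Q' \<le> (\<integral>p. (cmod (u p))^2 \<partial>lborel)"
    unfolding Q'_def
  proof (rule L2_lower[OF uL2 _ less_imp_le[OF mp]])
    fix p assume "p \<in> cbox (3*L/2, y0 - 1/2) (5*L/2, y0 + 1/2)"
    moreover obtain x y where "p = (x,y)" by force
    ultimately show "m \<le> cmod (u p)" unfolding u_def m_def using uu_low[of nu L R x y y0 k] nu L0 R1 by auto
  qed
  have upos: "0 < (\<integral>p. (cmod (u p))^2 \<partial>lborel)"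
    using uint mQ' mp L0 by (smt (verit) mult_pos_pos zero_less_power)
  have "(\<integral>p. (cmod (Hop B w lam V u p - complex_of_real z * u p))^2 \<partial>lborel) \<le> L * (\<delta>^2 * (4*R))"
    using Eint mQ by (simp add: algebra_simps)
  also have "\<dots> \<le> L * (e^2 * m^2)" using key L0 by (intro mult_left_mono) auto
  also have "\<dots> = e^2 * (m^2 * measure lborel Q')" using mQ' by simp
  also have "\<dots> \<le> e^2 * (\<integral>p. (cmod (u p))^2 \<partial>lborel)" using uint by (intro mult_left_mono) auto
  finally have main: "(\<integral>p. (cmod (Hop B w lam V u p - complex_of_real z * u p))^2 \<partial>lborel) \<le> e^2 * (\<integral>p. (cmod (u p))^2 \<partial>lborel)" .
  have "L2norm (\<lambda>p. Hop B w lam V u p - complex_of_real z * u p) \<le> sqrt (e^2 * (\<integral>p. (cmod (u p))^2 \<partial>lborel))"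
    unfolding L2norm_def using main by simp
  also have "\<dots> = e * L2norm u" unfolding L2norm_def using e by (simp add: real_sqrt_mult)
  finally have fin: "L2norm (\<lambda>p. Hop B w lam V u p - complex_of_real z * u p) \<le> e * L2norm u" .
  have "L2norm u > 0" unfolding L2norm_def using upos by simp
  moreover have "test_fn u" unfolding u_def by (rule uu_test[OF L0 R0])
  ultimately show ?thesis using uL2 HL2 fin by blast
qed


lemma V_bound:
  fixes V :: "real \<Rightarrow> real"
  assumes c: "\<And>s. isCont V s" and sup: "\<forall>s. V s \<noteq> 0 \<longrightarrow> s \<in> {-s0..s0}" and s0: "s0 > 0"
    and nn: "\<forall>s. V s \<ge> 0"
  shows "\<exists>Vm. \<forall>s. 0 \<le> V s \<and> V s \<le> Vm"
proof -
  have "continuous_on {-s0..s0} V" using c by (intro continuous_at_imp_continuous_on) auto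
  then obtain t0 where t0: "t0 \<in> {-s0..s0}" "\<forall>t\<in>{-s0..s0}. V t \<le> V t0"
    using continuous_attains_sup[of "{-s0..s0}" V] s0 by auto
  have "\<forall>s. 0 \<le> V s \<and> V s \<le> V t0"
  proof
    fix s show "0 \<le> V s \<and> V s \<le> V t0"
      using t0 sup nn by (cases "V s = 0") (auto simp: less_eq_real_def)
  qed
  then show ?thesis by blast
qed

lemma params_ok:
  fixes w B zeta :: real
  assumes w: "w > 0" and z: "zeta \<ge> sqrt (w^2 + B^2)"
  defines "nu \<equiv> sqrt (w^2 + B^2)"
  defines "k \<equiv> nu * sqrt (zeta - nu) / w"
  defines "y0 \<equiv> -(k*B) / nu^2"
  shows "params w B nu k y0 zeta"
proof -
  have pos: "0 < w^2 + B^2" using w by (simp add: add_pos_nonneg)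
  have nu: "nu > 0" unfolding nu_def using pos by simp
  have nu2: "nu^2 = w^2 + B^2" unfolding nu_def using pos by simp
  have zn: "zeta - nu \<ge> 0" using z unfolding nu_def by simp
  have k2: "k^2 * w^2 = nu^2 * (zeta - nu)"
    unfolding k_def using w zn by (simp add: power_divide power_mult_distrib)
  have "y0 * nu^2 = -(k*B)" unfolding y0_def using nu by simp
  moreover have "zeta * nu^2 = nu^3 + k^2 * w^2" unfolding k2 by (simp add: algebra_simps power3_eq_cube power2_eq_square)
  ultimately show ?thesis using nu nu2 by (simp add: params_def)
qed

theorem mainTheorem10:
  fixes w B lam s0 :: real and V :: "real \<Rightarrow> real"
  assumes "w > 0" and "B > 0" and "lam \<le> 0"
    and "\<forall>s. V s \<ge> 0"
    and "\<forall>n x. (deriv ^^ n) V differentiable (at x)"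
    and "bounded (range (deriv V))"
    and "s0 > 0" and "\<forall>s. V s \<noteq> 0 \<longrightarrow> s \<in> {-s0..s0}"
  shows "complex_of_real ` {sqrt (w^2 + B^2)..} \<subseteq> ess_spectrum (closure_graph (Hop B w lam V))"
proof -
  have w: "w > 0" and B: "B > 0" and s0: "s0 > 0" using assms by auto
  have Vc: "isCont V s" for s
  proof -
    have "(deriv ^^ 0) V differentiable (at s)" using assms(5) by blast
    then show ?thesis by (simp add: differentiable_imp_continuous_within)
  qed
  obtain Vm where Vr: "\<forall>s. 0 \<le> V s \<and> V s \<le> Vm" using V_bound[OF Vc assms(8) s0 assms(4)] by blast
  have Vs: "\<forall>s. V s \<noteq> 0 \<longrightarrow> \<bar>s\<bar> \<le> s0" using assms(8) by auto
  obtain K1 where K1: "\<forall>t. \<bar>rho1 t\<bar> \<le> K1" using rho1_bound by blast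
  obtain K2 where K2: "\<forall>t. \<bar>rho2 t\<bar> \<le> K2" using rho2_bound by blast
  define G where "G = closure_graph (Hop B w lam V)"
  have spec: "complex_of_real zeta \<in> op_spectrum G" if z: "zeta \<ge> sqrt (w^2 + B^2)" for zeta
  proof -
    define nu where "nu = sqrt (w^2 + B^2)"
    define k where "k = nu * sqrt (zeta - nu) / w"
    define y0 where "y0 = -(k*B) / nu^2"
    have P: "params w B nu k y0 zeta" unfolding nu_def k_def y0_def by (rule params_ok[OF w z])
    have "\<not> in_resolvent (closure_graph (Hop B w lam V)) (complex_of_real zeta)"
    proof (rule not_resolvent)
      fix f g assume "test_fn f" "test_fn g"
      then show "Hop B w lam V (\<lambda>z. f z - g z) = (\<lambda>z. Hop B w lam V f z - Hop B w lam V g z)"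
        by (rule Hop_diff)
    next
      fix e :: real assume "e > 0"
      then show "\<exists>u. test_fn u \<and> u \<in> L2 \<and> Hop B w lam V u \<in> L2 \<and> 0 < L2norm u \<and>
          L2norm (\<lambda>p. Hop B w lam V u p - complex_of_real zeta * u p) \<le> e * L2norm u"
        using weyl[OF P _ K1 K2 Vr Vs Vc] B by auto
    qed
    then show ?thesis by (simp add: op_spectrum_def G_def)
  qed
  show ?thesis unfolding G_def[symmetric]
  proof
    fix zc assume "zc \<in> complex_of_real ` {sqrt (w^2 + B^2)..}"
    then obtain zeta where z: "zeta \<ge> sqrt (w^2 + B^2)" and zc: "zc = complex_of_real zeta" by auto
    have in_sp: "zc \<in> op_spectrum G" using spec[OF z] zc by simp
    have not_iso: "\<not> (\<exists>e>0. ball zc e \<inter> op_spectrum G \<subseteq> {zc})"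
    proof
      assume "\<exists>e>0. ball zc e \<inter> op_spectrum G \<subseteq> {zc}"
      then obtain e where e: "e > 0" "ball zc e \<inter> op_spectrum G \<subseteq> {zc}" by blast
      have z2: "zeta + e/2 \<ge> sqrt (w^2 + B^2)" using z e by simp
      have "complex_of_real (zeta + e/2) \<in> op_spectrum G" by (rule spec[OF z2])
      moreover have "complex_of_real (zeta + e/2) \<in> ball zc e"
        using e unfolding zc by (simp add: dist_norm norm_of_real[symmetric] of_real_diff[symmetric] del: of_real_diff)
      moreover have "complex_of_real (zeta + e/2) \<noteq> zc" using e unfolding zc by simp
      ultimately show False using e(2) by blast
    qed
    show "zc \<in> ess_spectrum G"
      using in_sp not_iso by (auto simp: ess_spectrum_def disc_spectrum_def)
  qed
qed


end
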